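(* Let $\mathbf{F}$ be a three-dimensional Euclidean space with inner product $\langle\cdot,\cdot\rangle$, let $Z\in\mathbf{F}$ be a unit vector and $R>0$. Let $B$ be the sphere of radius $R$ centered at the origin, and $\mathbf{E}=\{q\in\mathbf{F}:\langle Z,q\rangle=R\}$ the plane tangent to $B$ at $O=RZ$. For $q\in B$ put $h=\langle Z,q\rangle/R$, $Z_B=Z-\frac{h}{R}q$, and $b(q)=R^{-2}(1-h^2)^{-3/2}$. Consider a particle of unit mass moving on $B$, in the open hemisphere $\{h>0\}$ minus the point $O$, according to the spherical Kepler problem, i.e. $\ddot q=b(q)\,Z_B+\lambda q$ with $\lambda$ the scalar (depending on $q,\dot q$, possibly $t$) that keeps $q$ on $B$. Its energy is $$\mathcal{E}=\tfrac12\|\dot q\|^2+U(q),\qquad U(q)=-\frac{h}{R\sqrt{1-h^2}}.$$ Let $q_{\mathbf{E}}=q/h\in\mathbf{E}$ be the central projection, $Q=q_{\mathbf{E}}-RZ$, and $\tau$ the time defined by $d\tau=h^{-2}\,dt$. Then $Q$ satisfies $\frac{d^2Q}{d\tau^2}=-\|Q\|^{-3}Q$; suppose that its orbit is an ellipse with semi-major axis $a$ and eccentricity $e$. Then $$\mathcal{E}=-\frac{1}{2a}+\frac{a(1-e^2)}{2R^2}.$$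
   Context: Dots denote derivatives with respect to the original time $t$. The Kepler problem in the plane $\mathbf{E}$ (with attracting center $O$ and unit masses) has energy $E=\frac12\|dQ/d\tau\|^2-\frac1{\|Q\|}$; for an elliptic orbit with semi-major axis $a$ and eccentricity $e$ one has $E=-\frac1{2a}$ and squared angular momentum $\|Q\times dQ/d\tau\|^2=a(1-e^2)$. *)

theory Defs
  imports "HOL-Analysis.Analysis"
begin

definition hgt :: "real \<Rightarrow> 'a::real_inner \<Rightarrow> 'a \<Rightarrow> real" where
  "hgt R Z q = (Z \<bullet> q) / R"

definition ZB :: "real \<Rightarrow> 'a::real_inner \<Rightarrow> 'a \<Rightarrow> 'a" where
  "ZB R Z q = Z - (hgt R Z q / R) *\<^sub>R q"

definition bcoef :: "real \<Rightarrow> 'a::real_inner \<Rightarrow> 'a \<Rightarrow> real" where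
  "bcoef R Z q = 1 / (R^2 * (1 - (hgt R Z q)^2) powr (3/2))"

definition Upot :: "real \<Rightarrow> 'a::real_inner \<Rightarrow> 'a \<Rightarrow> real" where
  "Upot R Z q = - hgt R Z q / (R * sqrt (1 - (hgt R Z q)^2))"

definition energy :: "real \<Rightarrow> 'a::real_inner \<Rightarrow> 'a \<Rightarrow> 'a \<Rightarrow> real" where
  "energy R Z q v = 1/2 * (norm v)^2 + Upot R Z q"

definition Qproj :: "real \<Rightarrow> 'a::real_inner \<Rightarrow> 'a \<Rightarrow> 'a" where
  "Qproj R Z q = (1 / hgt R Z q) *\<^sub>R q - R *\<^sub>R Z"

text \<open>S is an ellipse with semi-major axis a and eccentricity e lying in the plane
  orthogonal to Z (the plane E translated to the origin O): the points of that plane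
  whose distances to the two foci c1, c2 (in the plane) sum to 2a, with dist c1 c2 = 2 a e.\<close>
definition is_ellipse :: "'a::real_inner \<Rightarrow> real \<Rightarrow> real \<Rightarrow> 'a set \<Rightarrow> bool" where
  "is_ellipse Z a e S \<longleftrightarrow> 0 < a \<and> 0 \<le> e \<and> e < 1 \<and>
     (\<exists>c1 c2. Z \<bullet> c1 = 0 \<and> Z \<bullet> c2 = 0 \<and> dist c1 c2 = 2 * a * e \<and>
        S = {x. Z \<bullet> x = 0 \<and> dist x c1 + dist x c2 = 2 * a})"

end

theory Submission
  imports Defs "HOL-Analysis.Analysis"
begin

lemma norm_deriv:
  fixes Q :: "real \<Rightarrow> 'a::real_inner"
  assumes "(Q has_vector_derivative D) (at t)" "Q t \<noteq> 0"
  shows "((\<lambda>t. norm (Q t)) has_real_derivative (Q t \<bullet> D) / norm (Q t)) (at t)"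
proof -
  have i: "((\<lambda>t. Q t \<bullet> Q t) has_real_derivative (Q t \<bullet> D + D \<bullet> Q t)) (at t)"
    using bounded_bilinear.has_vector_derivative[OF bounded_bilinear_inner assms(1) assms(1)]
    by (simp add: has_real_derivative_iff_has_vector_derivative)
  have pos: "0 < Q t \<bullet> Q t" using assms(2) by simp
  have "((\<lambda>t. sqrt (Q t \<bullet> Q t)) has_real_derivative
          (Q t \<bullet> D + D \<bullet> Q t) * (inverse (sqrt (Q t \<bullet> Q t)) / 2)) (at t)"
    using DERIV_chain2[OF DERIV_real_sqrt[OF pos] i] by (simp add: mult.commute)
  moreover have "(Q t \<bullet> D + D \<bullet> Q t) * (inverse (sqrt (Q t \<bullet> Q t)) / 2) = (Q t \<bullet> D) / norm (Q t)"
    by (simp add: inner_commute norm_eq_sqrt_inner field_simps)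
  ultimately show ?thesis by (simp add: norm_eq_sqrt_inner)
qed

lemma conservation:
  fixes Q W :: "real \<Rightarrow> 'a::real_inner" and al :: "real \<Rightarrow> real" and I :: "real set"
  assumes I: "convex I" "open I"
    and dQ: "\<And>t. t \<in> I \<Longrightarrow> (Q has_vector_derivative al t *\<^sub>R W t) (at t)"
    and dW: "\<And>t. t \<in> I \<Longrightarrow> (W has_vector_derivative (- (al t / norm (Q t) ^ 3)) *\<^sub>R Q t) (at t)"
    and nz: "\<And>t. t \<in> I \<Longrightarrow> Q t \<noteq> 0"
  shows "\<exists>c. \<forall>t\<in>I. (W t \<bullet> W t) *\<^sub>R Q t - (Q t \<bullet> W t) *\<^sub>R W t - (1 / norm (Q t)) *\<^sub>R Q t = c"
    and "\<exists>c. \<forall>t\<in>I. (Q t \<bullet> Q t) * (W t \<bullet> W t) - (Q t \<bullet> W t)^2 = c"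
proof -
  have inn: "\<And>f g f' g' t. (f has_vector_derivative f') (at t) \<Longrightarrow> (g has_vector_derivative g') (at t) \<Longrightarrow>
     ((\<lambda>t. f t \<bullet> g t) has_real_derivative (f t \<bullet> g' + f' \<bullet> g t)) (at t)"
    for f g :: "real \<Rightarrow> 'a"
    using bounded_bilinear.has_vector_derivative[OF bounded_bilinear_inner]
    by (simp add: has_real_derivative_iff_has_vector_derivative)
  show "\<exists>c. \<forall>t\<in>I. (W t \<bullet> W t) *\<^sub>R Q t - (Q t \<bullet> W t) *\<^sub>R W t - (1 / norm (Q t)) *\<^sub>R Q t = c"
  proof (rule has_derivative_zero_constant[OF I(1)])
    fix t assume t: "t \<in> I"
    let ?a = "al t" and ?r = "norm (Q t)" and ?q = "Q t" and ?w = "W t"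
    have rpos: "?r > 0" using nz[OF t] by simp
    have nd: "((\<lambda>t. norm (Q t)) has_real_derivative (?q \<bullet> (?a *\<^sub>R ?w)) / ?r) (at t)"
      by (rule norm_deriv[OF dQ[OF t] nz[OF t]])
    note ww = inn[OF dW[OF t] dW[OF t]]
    note qw = inn[OF dQ[OF t] dW[OF t]]
    have ir: "((\<lambda>t. 1 / norm (Q t)) has_real_derivative (- ((?q \<bullet> (?a *\<^sub>R ?w)) / ?r) / ?r^2)) (at t)"
      using DERIV_inverse_fun[OF nd] rpos by (simp add: inverse_eq_divide power2_eq_square)
    have "((\<lambda>t. (W t \<bullet> W t) *\<^sub>R Q t - (Q t \<bullet> W t) *\<^sub>R W t - (1 / norm (Q t)) *\<^sub>R Q t) has_vector_derivative
       ((W t \<bullet> W t) *\<^sub>R (?a *\<^sub>R ?w) + (W t \<bullet> ((- (?a / ?r ^ 3)) *\<^sub>R ?q) + ((- (?a / ?r ^ 3)) *\<^sub>R ?q) \<bullet> W t) *\<^sub>R ?q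
        - ((Q t \<bullet> W t) *\<^sub>R ((- (?a / ?r ^ 3)) *\<^sub>R ?q) + (Q t \<bullet> ((- (?a / ?r ^ 3)) *\<^sub>R ?q) + (?a *\<^sub>R ?w) \<bullet> W t) *\<^sub>R W t)
        - ((1 / ?r) *\<^sub>R (?a *\<^sub>R ?w) + (- ((?q \<bullet> (?a *\<^sub>R ?w)) / ?r) / ?r^2) *\<^sub>R ?q))) (at t)"
      apply (intro has_vector_derivative_diff has_vector_derivative_scaleR dQ[OF t] dW[OF t] ww qw)
      using ir by (simp add: power2_eq_square)
    moreover have "((W t \<bullet> W t) *\<^sub>R (?a *\<^sub>R ?w) + (W t \<bullet> ((- (?a / ?r ^ 3)) *\<^sub>R ?q) + ((- (?a / ?r ^ 3)) *\<^sub>R ?q) \<bullet> W t) *\<^sub>R ?q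
        - ((Q t \<bullet> W t) *\<^sub>R ((- (?a / ?r ^ 3)) *\<^sub>R ?q) + (Q t \<bullet> ((- (?a / ?r ^ 3)) *\<^sub>R ?q) + (?a *\<^sub>R ?w) \<bullet> W t) *\<^sub>R W t)
        - ((1 / ?r) *\<^sub>R (?a *\<^sub>R ?w) + (- ((?q \<bullet> (?a *\<^sub>R ?w)) / ?r) / ?r^2) *\<^sub>R ?q)) = 0"
    proof -
      have qq: "?q \<bullet> ?q = ?r^2" by (simp add: power2_norm_eq_inner)
      let ?k = "?a / ?r ^ 3"
      have e: "((W t \<bullet> W t) *\<^sub>R (?a *\<^sub>R ?w) + (W t \<bullet> ((- (?a / ?r ^ 3)) *\<^sub>R ?q) + ((- (?a / ?r ^ 3)) *\<^sub>R ?q) \<bullet> W t) *\<^sub>R ?q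
        - ((Q t \<bullet> W t) *\<^sub>R ((- (?a / ?r ^ 3)) *\<^sub>R ?q) + (Q t \<bullet> ((- (?a / ?r ^ 3)) *\<^sub>R ?q) + (?a *\<^sub>R ?w) \<bullet> W t) *\<^sub>R W t)
        - ((1 / ?r) *\<^sub>R (?a *\<^sub>R ?w) + (- ((?q \<bullet> (?a *\<^sub>R ?w)) / ?r) / ?r^2) *\<^sub>R ?q))
        = (?a * (?w \<bullet> ?w) + ?k * ?r^2 - ?a * (?w \<bullet> ?w) - ?a / ?r) *\<^sub>R ?w
          + (- 2 * ?k * (?q \<bullet> ?w) + ?k * (?q \<bullet> ?w) + ?a * (?q \<bullet> ?w) / ?r^3) *\<^sub>R ?q"
        by (simp add: algebra_simps inner_commute qq power3_eq_cube power2_eq_square) (simp only: scaleR_add_left[symmetric], simp)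
      have c1: "?a * (?w \<bullet> ?w) + ?k * ?r^2 - ?a * (?w \<bullet> ?w) - ?a / ?r = 0"
        using rpos by (simp add: power3_eq_cube power2_eq_square field_simps)
      have c2: "- 2 * ?k * (?q \<bullet> ?w) + ?k * (?q \<bullet> ?w) + ?a * (?q \<bullet> ?w) / ?r^3 = 0"
        by (simp add: field_simps)
      show ?thesis unfolding e c1 c2 by simp
    qed
    ultimately show "((\<lambda>t. (W t \<bullet> W t) *\<^sub>R Q t - (Q t \<bullet> W t) *\<^sub>R W t - (1 / norm (Q t)) *\<^sub>R Q t) has_derivative (\<lambda>h. 0)) (at t within I)"
      by (simp add: has_vector_derivative_def has_derivative_at_withinI)
  qed
  show "\<exists>c. \<forall>t\<in>I. (Q t \<bullet> Q t) * (W t \<bullet> W t) - (Q t \<bullet> W t)^2 = c"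
  proof (rule has_field_derivative_zero_constant[OF I(1)])
    fix t assume t: "t \<in> I"
    let ?a = "al t" and ?r = "norm (Q t)" and ?q = "Q t" and ?w = "W t"
    have "((\<lambda>t. (Q t \<bullet> Q t) * (W t \<bullet> W t) - (Q t \<bullet> W t)^2) has_real_derivative
      (?q \<bullet> (?a *\<^sub>R ?w) + (?a *\<^sub>R ?w) \<bullet> ?q) * (?w \<bullet> ?w) + (?q \<bullet> ?q) * (?w \<bullet> ((- (?a / ?r ^ 3)) *\<^sub>R ?q) + ((- (?a / ?r ^ 3)) *\<^sub>R ?q) \<bullet> ?w)
      - 2 * (?q \<bullet> ?w) * (?q \<bullet> ((- (?a / ?r ^ 3)) *\<^sub>R ?q) + (?a *\<^sub>R ?w) \<bullet> ?w)) (at t)"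
      by (rule derivative_eq_intros inn[OF dQ[OF t] dQ[OF t]] inn[OF dW[OF t] dW[OF t]] inn[OF dQ[OF t] dW[OF t]] | simp)+
    moreover have "(?q \<bullet> (?a *\<^sub>R ?w) + (?a *\<^sub>R ?w) \<bullet> ?q) * (?w \<bullet> ?w) + (?q \<bullet> ?q) * (?w \<bullet> ((- (?a / ?r ^ 3)) *\<^sub>R ?q) + ((- (?a / ?r ^ 3)) *\<^sub>R ?q) \<bullet> ?w)
      - 2 * (?q \<bullet> ?w) * (?q \<bullet> ((- (?a / ?r ^ 3)) *\<^sub>R ?q) + (?a *\<^sub>R ?w) \<bullet> ?w) = 0"
      by (simp add: algebra_simps inner_commute)
    ultimately show "((\<lambda>t. (Q t \<bullet> Q t) * (W t \<bullet> W t) - (Q t \<bullet> W t)^2) has_field_derivative 0) (at t within I)"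
      by (simp add: has_field_derivative_at_within)
  qed
qed

lemma inner_deriv:
  fixes f g :: "real \<Rightarrow> 'a::real_inner"
  shows "(f has_vector_derivative f') (at t) \<Longrightarrow> (g has_vector_derivative g') (at t) \<Longrightarrow>
     ((\<lambda>t. f t \<bullet> g t) has_real_derivative (f t \<bullet> g' + f' \<bullet> g t)) (at t)"
  using bounded_bilinear.has_vector_derivative[OF bounded_bilinear_inner]
  by (simp add: has_real_derivative_iff_has_vector_derivative)

lemma powr32: "x > 0 \<Longrightarrow> x powr (3/2) = (sqrt x)^3"
proof -
  assume x: "x > 0"
  have "x powr (3/2) = x powr (1 + 1/2)" by simp
  also have "\<dots> = x powr 1 * x powr (1/2)" by (simp only: powr_add)
  also have "\<dots> = x * x powr (1/2)" using x by simp
  also have "\<dots> = (sqrt x)^3" using x by (simp add: powr_half_sqrt power3_eq_cube)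
  finally show ?thesis .
qed

lemma hgt_bounds:
  fixes Z q :: "'a::real_inner"
  assumes "norm Z = 1" "R > 0" "norm q = R" "hgt R Z q > 0" "q \<noteq> R *\<^sub>R Z"
  shows "hgt R Z q < 1"
proof (rule ccontr)
  assume "\<not> hgt R Z q < 1"
  hence "Z \<bullet> q \<ge> R" using assms(2) by (simp add: hgt_def field_simps)
  moreover have "Z \<bullet> q \<le> R" using norm_cauchy_schwarz[of Z q] assms by simp
  ultimately have zq: "Z \<bullet> q = R" by simp
  have zz: "Z \<bullet> Z = 1" using assms(1) by (simp add: power2_norm_eq_inner[symmetric])
  have qq: "q \<bullet> q = R^2" using assms(3) by (simp add: power2_norm_eq_inner[symmetric])
  have "norm (q - R *\<^sub>R Z)^2 = 0"
    unfolding power2_norm_eq_inner using zq zz qq by (simp add: algebra_simps inner_commute power2_eq_square)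
  thus False using assms(5) by simp
qed

lemma normQ:
  fixes Z q :: "'a::real_inner"
  assumes "norm Z = 1" "R > 0" "norm q = R" "hgt R Z q > 0"
  shows "norm (Qproj R Z q)^2 = R^2 * (1 - (hgt R Z q)^2) / (hgt R Z q)^2"
proof -
  let ?h = "hgt R Z q"
  have zq: "Z \<bullet> q = R * ?h" using assms(2) by (simp add: hgt_def)
  have zz: "Z \<bullet> Z = 1" using assms(1) by (simp add: power2_norm_eq_inner[symmetric])
  have qq: "q \<bullet> q = R^2" using assms(3) by (simp add: power2_norm_eq_inner[symmetric])
  show ?thesis using assms(4) unfolding Qproj_def power2_norm_eq_inner
    by (simp add: algebra_simps inner_commute zq zz qq field_simps power2_eq_square)
qed

lemma kin:
  fixes Z :: "'a::real_inner" and q v :: "real \<Rightarrow> 'a" and lam :: "real \<Rightarrow> real"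
  assumes unitZ: "norm Z = 1" and Rpos: "R > 0" and nq: "norm (q t) = R" and hp: "hgt R Z (q t) > 0"
    and ne: "q t \<noteq> R *\<^sub>R Z"
    and dq: "(q has_vector_derivative v t) (at t)"
    and dv: "(v has_vector_derivative (bcoef R Z (q t) *\<^sub>R ZB R Z (q t) + lam t *\<^sub>R q t)) (at t)"
  shows "((\<lambda>t. Qproj R Z (q t)) has_vector_derivative
           (1 / (hgt R Z (q t))^2) *\<^sub>R (hgt R Z (q t) *\<^sub>R v t - ((Z \<bullet> v t) / R) *\<^sub>R q t)) (at t)"
    and "((\<lambda>t. hgt R Z (q t) *\<^sub>R v t - ((Z \<bullet> v t) / R) *\<^sub>R q t) has_vector_derivative
           (- ((1 / (hgt R Z (q t))^2) / norm (Qproj R Z (q t)) ^ 3)) *\<^sub>R Qproj R Z (q t)) (at t)"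
proof -
  let ?h = "hgt R Z (q t)"
  have h1: "?h < 1" by (rule hgt_bounds[OF unitZ Rpos nq hp ne])
  have dh: "((\<lambda>t. hgt R Z (q t)) has_real_derivative (Z \<bullet> v t) / R) (at t)"
  proof -
    have "((\<lambda>t. Z \<bullet> q t) has_real_derivative Z \<bullet> v t) (at t)"
      using inner_deriv[OF has_vector_derivative_const[of Z] dq] by simp
    thus ?thesis unfolding hgt_def using Rpos by (intro derivative_eq_intros) auto
  qed
  have dih: "((\<lambda>t. 1 / hgt R Z (q t)) has_real_derivative - ((Z \<bullet> v t) / R) / ?h^2) (at t)"
    using DERIV_inverse_fun[OF dh] hp by (simp add: inverse_eq_divide power2_eq_square)
  show "((\<lambda>t. Qproj R Z (q t)) has_vector_derivative
           (1 / ?h^2) *\<^sub>R (?h *\<^sub>R v t - ((Z \<bullet> v t) / R) *\<^sub>R q t)) (at t)"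
  proof -
    have "((\<lambda>t. (1 / hgt R Z (q t)) *\<^sub>R q t - R *\<^sub>R Z) has_vector_derivative
            ((1 / ?h) *\<^sub>R v t + (- ((Z \<bullet> v t) / R) / ?h^2) *\<^sub>R q t) - 0) (at t)"
      by (intro has_vector_derivative_diff has_vector_derivative_scaleR dih dq has_vector_derivative_const)
    moreover have "((1 / ?h) *\<^sub>R v t + (- ((Z \<bullet> v t) / R) / ?h^2) *\<^sub>R q t) - 0
        = (1 / ?h^2) *\<^sub>R (?h *\<^sub>R v t - ((Z \<bullet> v t) / R) *\<^sub>R q t)"
      using hp by (simp add: algebra_simps power2_eq_square divide_simps)
    ultimately show ?thesis unfolding Qproj_def by simp
  qed
  let ?b = "bcoef R Z (q t)" and ?a = "bcoef R Z (q t) *\<^sub>R ZB R Z (q t) + lam t *\<^sub>R q t"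
  have dzv: "((\<lambda>t. (Z \<bullet> v t) / R) has_real_derivative (Z \<bullet> ?a) / R) (at t)"
  proof -
    have "((\<lambda>t. Z \<bullet> v t) has_real_derivative Z \<bullet> ?a) (at t)"
      using inner_deriv[OF has_vector_derivative_const[of Z] dv] by simp
    thus ?thesis using Rpos by (intro derivative_eq_intros) auto
  qed
  have "((\<lambda>t. hgt R Z (q t) *\<^sub>R v t - ((Z \<bullet> v t) / R) *\<^sub>R q t) has_vector_derivative
     (?h *\<^sub>R ?a + ((Z \<bullet> v t) / R) *\<^sub>R v t) - (((Z \<bullet> v t) / R) *\<^sub>R v t + ((Z \<bullet> ?a) / R) *\<^sub>R q t)) (at t)"
    by (intro has_vector_derivative_diff has_vector_derivative_scaleR dh dzv dq dv)
  moreover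
  have zq: "Z \<bullet> q t = R * ?h" using Rpos by (simp add: hgt_def)
  have zz: "Z \<bullet> Z = 1" using unitZ by (simp add: power2_norm_eq_inner[symmetric])
  have "(?h *\<^sub>R ?a + ((Z \<bullet> v t) / R) *\<^sub>R v t) - (((Z \<bullet> v t) / R) *\<^sub>R v t + ((Z \<bullet> ?a) / R) *\<^sub>R q t)
      = (- (?b * ?h / R)) *\<^sub>R Qproj R Z (q t)"
  proof -
    have za: "Z \<bullet> ?a = ?b * (1 - ?h^2) + lam t * R * ?h"
      unfolding ZB_def using Rpos by (simp add: inner_add_right inner_diff_right zq zz power2_eq_square)
    have e1: "(?h *\<^sub>R ?a + ((Z \<bullet> v t) / R) *\<^sub>R v t) - (((Z \<bullet> v t) / R) *\<^sub>R v t + ((Z \<bullet> ?a) / R) *\<^sub>R q t)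
       = (?h * ?b) *\<^sub>R Z + (- ?b * ?h * ?h / R + ?h * lam t - (?b * (1 - ?h^2) + lam t * R * ?h) / R) *\<^sub>R q t"
      unfolding za unfolding ZB_def by (simp add: algebra_simps)
    have e2: "(- (?b * ?h / R)) *\<^sub>R Qproj R Z (q t) = (?h * ?b) *\<^sub>R Z + (- ?b / R) *\<^sub>R q t"
      unfolding Qproj_def using Rpos hp by (simp add: algebra_simps)
    have e3: "- ?b * ?h * ?h / R + ?h * lam t - (?b * (1 - ?h^2) + lam t * R * ?h) / R = - ?b / R"
      using Rpos by (simp add: field_simps power2_eq_square)
    show ?thesis unfolding e1 e2 e3 ..
  qed
  moreover have "?b * ?h / R = (1 / ?h^2) / norm (Qproj R Z (q t)) ^ 3"
  proof -
    have s: "0 < 1 - ?h^2" using h1 hp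
      by (simp add: power2_eq_square) (metis mult_strict_mono' less_eq_real_def mult_1 not_less)
    have nQ: "norm (Qproj R Z (q t)) = R * sqrt (1 - ?h^2) / ?h"
    proof -
      have "norm (Qproj R Z (q t)) = sqrt (R^2 * (1 - ?h^2) / ?h^2)"
        using normQ[OF unitZ Rpos nq hp] by (metis norm_ge_zero real_sqrt_unique)
      also have "\<dots> = R * sqrt (1 - ?h^2) / ?h" using Rpos hp
        by (simp add: real_sqrt_divide real_sqrt_mult)
      finally show ?thesis .
    qed
    have sq: "sqrt (1 - ?h^2) > 0" using s by simp
    show ?thesis unfolding nQ bcoef_def powr32[OF s] using Rpos hp sq
      by (simp add: power_divide power_mult_distrib field_simps power3_eq_cube power2_eq_square)
  qed
  ultimately show "((\<lambda>t. hgt R Z (q t) *\<^sub>R v t - ((Z \<bullet> v t) / R) *\<^sub>R q t) has_vector_derivative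
           (- ((1 / (hgt R Z (q t))^2) / norm (Qproj R Z (q t)) ^ 3)) *\<^sub>R Qproj R Z (q t)) (at t)"
    by simp
qed

lemma kin_inner:
  fixes Z q v :: "'a::real_inner"
  assumes unitZ: "norm Z = 1" and Rpos: "R > 0" and nq: "norm q = R" and hp: "hgt R Z q > 0"
    and qv: "q \<bullet> v = 0"
    and h_def: "h = hgt R Z q" and Q_def: "Q = Qproj R Z q" and W_def: "W = h *\<^sub>R v - ((Z \<bullet> v) / R) *\<^sub>R q"
  shows "Z \<bullet> Q = 0" "Z \<bullet> W = 0" "Q \<bullet> Q = R^2/h^2 - R^2"
    "W \<bullet> W = h^2 * (v \<bullet> v) + (Z \<bullet> v)^2" "Q \<bullet> W = - R * (Z \<bullet> v) / h"
proof -
  have zq: "Z \<bullet> q = R * h" using Rpos by (simp add: hgt_def h_def)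
  have zz: "Z \<bullet> Z = 1" using unitZ by (simp add: power2_norm_eq_inner[symmetric])
  have qq: "q \<bullet> q = R^2" using nq by (simp add: power2_norm_eq_inner[symmetric])
  have h0: "h \<noteq> 0" using hp h_def by simp
  have qv': "v \<bullet> q = 0" using qv by (simp add: inner_commute)
  have zq': "q \<bullet> Z = R * h" using zq by (simp add: inner_commute)
  show "Z \<bullet> Q = 0" unfolding Q_def Qproj_def h_def[symmetric] using h0 zq zz by (simp add: inner_diff_right)
  show "Z \<bullet> W = 0" unfolding W_def using Rpos zq by (simp add: inner_diff_right)
  show "Q \<bullet> Q = R^2/h^2 - R^2" unfolding Q_def Qproj_def h_def[symmetric] using h0 zq zq' zz qq
    by (simp add: inner_diff_right inner_diff_left field_simps power2_eq_square)
  show "W \<bullet> W = h^2 * (v \<bullet> v) + (Z \<bullet> v)^2" unfolding W_def using Rpos qv qv' qq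
    by (simp add: inner_diff_right inner_diff_left field_simps power2_eq_square)
  show "Q \<bullet> W = - R * (Z \<bullet> v) / h" unfolding W_def Q_def Qproj_def h_def[symmetric]
    using Rpos h0 qv qv' qq zq zq' zz
    by (simp add: inner_diff_right inner_diff_left field_simps power2_eq_square inner_commute)
qed

lemma energy_id:
  fixes Z q v :: "'a::real_inner"
  assumes unitZ: "norm Z = 1" and Rpos: "R > 0" and nq: "norm q = R" and hp: "hgt R Z q > 0"
    and ne: "q \<noteq> R *\<^sub>R Z" and qv: "q \<bullet> v = 0"
    and h_def: "h = hgt R Z q" and Q_def: "Q = Qproj R Z q" and W_def: "W = h *\<^sub>R v - ((Z \<bullet> v) / R) *\<^sub>R q"
  shows "energy R Z q v = 1/2 * (W \<bullet> W) - 1 / norm Q + ((Q \<bullet> Q) * (W \<bullet> W) - (Q \<bullet> W)^2) / (2 * R^2)"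
proof -
  note ki = kin_inner[OF unitZ Rpos nq hp qv h_def Q_def W_def]
  have h1: "h < 1" using hgt_bounds[OF unitZ Rpos nq hp ne] h_def by simp
  have hp': "h > 0" using hp h_def by simp
  have s: "0 < 1 - h^2" using h1 hp'
    by (simp add: power2_eq_square) (metis mult_strict_mono' less_eq_real_def mult_1 not_less)
  have nQ: "norm Q = R * sqrt (1 - h^2) / h"
  proof -
    have "norm Q = sqrt (Q \<bullet> Q)" by (simp add: norm_eq_sqrt_inner)
    also have "Q \<bullet> Q = R^2 * (1 - h^2) / h^2" unfolding ki(3) using hp' by (simp add: field_simps)
    also have "sqrt (R^2 * (1 - h^2) / h^2) = R * sqrt (1 - h^2) / h" using Rpos hp'
      by (simp add: real_sqrt_divide real_sqrt_mult)
    finally show ?thesis .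
  qed
  have U: "Upot R Z q = - 1 / norm Q" unfolding Upot_def nQ h_def[symmetric] using Rpos hp' s
    by (simp add: field_simps)
  have "1/2 * (W \<bullet> W) + ((Q \<bullet> Q) * (W \<bullet> W) - (Q \<bullet> W)^2) / (2 * R^2) = 1/2 * (norm v)^2"
    unfolding ki(3-5) power2_norm_eq_inner using Rpos hp'
    by (simp add: field_simps power2_eq_square)
  thus ?thesis unfolding energy_def U by simp
qed

lemma time_change:
  fixes tau al :: "real \<Rightarrow> real" and Qf Wf :: "real \<Rightarrow> 'a::real_normed_vector"
    and nr :: "real \<Rightarrow> real"
  assumes t01: "t0 < t1"
    and dtau: "\<And>t. t \<in> {t0<..<t1} \<Longrightarrow> (tau has_real_derivative al t) (at t)"
    and alp: "\<And>t. t \<in> {t0<..<t1} \<Longrightarrow> al t > 0"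
    and dQ: "\<And>t. t \<in> {t0<..<t1} \<Longrightarrow> (Qf has_vector_derivative al t *\<^sub>R Wf t) (at t)"
    and dW: "\<And>t. t \<in> {t0<..<t1} \<Longrightarrow> (Wf has_vector_derivative (- (al t / nr t ^ 3)) *\<^sub>R Qf t) (at t)"
  shows "\<forall>s\<in>tau ` {t0<..<t1}.
     ((\<lambda>s. Qf (inv_into {t0<..<t1} tau s)) has_vector_derivative Wf (inv_into {t0<..<t1} tau s)) (at s) \<and>
     ((\<lambda>s. Wf (inv_into {t0<..<t1} tau s)) has_vector_derivative
        (- (1 / (nr (inv_into {t0<..<t1} tau s))^3)) *\<^sub>R Qf (inv_into {t0<..<t1} tau s)) (at s)"
proof
  let ?I = "{t0<..<t1}"
  let ?g = "inv_into ?I tau"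
  have cont: "\<And>t. t \<in> ?I \<Longrightarrow> isCont tau t"
    using dtau DERIV_isCont by blast
  have mono: "tau x < tau y" if "x \<in> ?I" "y \<in> ?I" "x < y" for x y
  proof (rule DERIV_pos_imp_increasing_open[OF that(3)])
    fix z assume "x < z" "z < y"
    hence "z \<in> ?I" using that by auto
    thus "\<exists>y. DERIV tau z :> y \<and> y > 0" using dtau alp by blast
  next
    show "continuous_on {x..y} tau"
      using that cont by (intro continuous_at_imp_continuous_on) auto
  qed
  have inj: "inj_on tau ?I"
    by (rule inj_onI) (metis linorder_neqE_linordered_idom mono less_irrefl)
  fix s assume "s \<in> tau ` ?I"
  then obtain t where t: "t \<in> ?I" and st: "s = tau t" by auto
  have gs: "?g s = t" using inj t st by (simp add: inv_into_f_f)
  obtain a where a: "t0 < a" "a < t" using t dense by auto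
  obtain b where b: "t < b" "b < t1" using t dense by auto
  have aI: "a \<in> ?I" and bI: "b \<in> ?I" using a b t by auto
  have gder: "(?g has_real_derivative inverse (al t)) (at s)"
  proof (rule DERIV_inverse_function[where a = "tau a" and b = "tau b"])
    show "DERIV tau (?g s) :> al t" using gs dtau t by simp
    show "al t \<noteq> 0" using alp t by (simp add: less_imp_neq[symmetric])
    show "tau a < s" using mono aI t a st by simp
    show "s < tau b" using mono bI t b st by simp
    show "tau (?g y) = y" if y: "tau a < y" "y < tau b" for y
    proof -
    from y obtain x where "a \<le> x" "x \<le> b" "tau x = y"
      using IVT[of tau a y b] cont aI bI a b by (force intro!: cont)
    hence "x \<in> ?I" "tau x = y" using a b t by auto
    thus "tau (?g y) = y" by (metis f_inv_into_f image_eqI)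
    qed
  next
    have "isCont ?g (tau t)"
    proof (rule isCont_inverse_function2[where a = a and b = b and f = tau and x = t])
      show "a < t" "t < b" using a b by auto
      fix z assume "a \<le> z" "z \<le> b"
      hence z: "z \<in> ?I" using a b t by auto
      show "?g (tau z) = z" using inv_into_f_f[OF inj z] .
      show "isCont tau z" using cont z .
    qed
    thus "isCont ?g s" using st by simp
  qed
  have gder': "(?g has_vector_derivative inverse (al t)) (at s)"
    using gder by (simp add: has_real_derivative_iff_has_vector_derivative)
  have ne: "al t \<noteq> 0" using alp t by (simp add: less_imp_neq[symmetric])
  have 1: "((Qf \<circ> ?g) has_vector_derivative inverse (al t) *\<^sub>R (al t *\<^sub>R Wf t)) (at s)"
    by (rule vector_diff_chain_at[OF gder']) (simp add: gs dQ[OF t])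
  have 2: "((Wf \<circ> ?g) has_vector_derivative inverse (al t) *\<^sub>R ((- (al t / nr t ^ 3)) *\<^sub>R Qf t)) (at s)"
    by (rule vector_diff_chain_at[OF gder']) (simp only: gs, rule dW[OF t])
  show "((\<lambda>s. Qf (?g s)) has_vector_derivative Wf (?g s)) (at s) \<and>
     ((\<lambda>s. Wf (?g s)) has_vector_derivative (- (1 / (nr (?g s))^3)) *\<^sub>R Qf (?g s)) (at s)"
  proof
    show "((\<lambda>s. Qf (?g s)) has_vector_derivative Wf (?g s)) (at s)"
      using 1 ne by (simp add: gs o_def)
    have e: "inverse (al t) *\<^sub>R ((- (al t / nr t ^ 3)) *\<^sub>R Qf t) = (- (1 / (nr t)^3)) *\<^sub>R Qf t"
      using ne by simp
    show "((\<lambda>s. Wf (?g s)) has_vector_derivative (- (1 / (nr (?g s))^3)) *\<^sub>R Qf (?g s)) (at s)"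
      using 2 unfolding e by (simp add: gs o_def)
  qed
qed

lemma circle_param:
  fixes x y :: real
  assumes "x^2 + y^2 = 1" "x \<noteq> -1"
  shows "x = (1 - (y/(1+x))^2) / (1 + (y/(1+x))^2) \<and> y = 2 * (y/(1+x)) / (1 + (y/(1+x))^2)"
proof -
  have "x \<ge> -1" using assms(1)
  proof -
    have "x^2 \<le> 1" using assms(1) by (metis le_add_same_cancel1 zero_le_power2)
    thus ?thesis by (metis abs_le_iff abs_square_le_1 minus_le_iff)
  qed
  hence xp: "1 + x > 0" using assms(2) by simp
  have yy: "y^2 = (1 - x) * (1 + x)" using assms(1) by (simp add: algebra_simps power2_eq_square)
  have tt: "(y/(1+x))^2 = (1 - x)/(1 + x)" unfolding power_divide yy using xp by (simp add: power2_eq_square)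
  show ?thesis unfolding tt using xp by (simp add: field_simps)
qed

lemma circle_quad:
  fixes k0 k1 k2 k3 k4 k5 :: real
  defines "f \<equiv> \<lambda>x y. k0 + k1*x + k2*y + k3*x^2 + k4*x*y + k5*y^2"
  assumes inf: "infinite {(x,y). x^2 + y^2 = 1 \<and> f x y = 0}"
  shows "\<forall>x y. x^2 + y^2 = 1 \<longrightarrow> f x y = 0"
proof -
  define c where "c = (\<lambda>i::nat. [k0 + k1 + k3, 2*k2 + 2*k4, 2*k0 - 2*k3 + 4*k5, 2*k2 - 2*k4, k0 - k1 + k3] ! i)"
  define psi where "psi = (\<lambda>t::real. ((1 - t^2)/(1 + t^2), 2*t/(1 + t^2)))"
  have key: "f (fst (psi t)) (snd (psi t)) * (1 + t^2)^2 = (\<Sum>i\<le>4. c i * t^i)" for t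
  proof -
    have pos: "1 + t^2 \<noteq> 0" by (metis add_pos_nonneg zero_less_one zero_le_power2 less_irrefl)
    define u where "u = 1 + t^2"
    have u: "u \<noteq> 0" using pos u_def by simp
    have a1: "(a/u) * u^2 = a * u" for a using u by (simp add: power2_eq_square)
    have a2: "(a/u)^2 * u^2 = a^2" for a using u by (simp add: power2_eq_square)
    have a3: "(a/u) * (b/u) * u^2 = a * b" for a b using u by (simp add: power2_eq_square)
    have "f (fst (psi t)) (snd (psi t)) * u^2 = k0*u^2 + k1*(((1 - t^2)/u) * u^2) + k2*((2*t/u)*u^2)
       + k3*(((1 - t^2)/u)^2 * u^2) + k4*((1 - t^2)/u * (2*t/u) * u^2) + k5*((2*t/u)^2*u^2)"
    proof -
      have gen: "(k0 + k1*x + k2*y + k3*x^2 + k4*x*y + k5*y^2)*U = k0*U + k1*(x*U) + k2*(y*U) + k3*(x^2*U) + k4*(x*y*U) + k5*(y^2*U)" for x y U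
        by (simp add: algebra_simps)
      show ?thesis unfolding f_def psi_def u_def[symmetric] fst_conv snd_conv gen ..
    qed
    also have "\<dots> = k0*u^2 + k1*((1 - t^2)*u) + k2*((2*t)*u) + k3*(1 - t^2)^2 + k4*((1 - t^2)*(2*t)) + k5*(2*t)^2"
      unfolding a1 a2 a3 ..
    also have "\<dots> = (\<Sum>i\<le>4. c i * t^i)"
      unfolding u_def c_def by (simp add: eval_nat_numeral algebra_simps)
    finally show ?thesis unfolding u_def .
  qed
  have allc: "\<forall>i\<le>4. c i = 0"
  proof (rule ccontr)
    assume "\<not> (\<forall>i\<le>4. c i = 0)"
    then obtain k where "c k \<noteq> 0" "k \<le> 4" by auto
    hence fin: "finite {t. (\<Sum>i\<le>4. c i * t^i) = 0}" by (rule polyfun_roots_finite)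
    have "{(x,y). x^2 + y^2 = 1 \<and> f x y = 0} \<subseteq> insert (-1, 0) (psi ` {t. (\<Sum>i\<le>4. c i * t^i) = 0})"
    proof
      fix z assume "z \<in> {(x,y). x^2 + y^2 = 1 \<and> f x y = 0}"
      then obtain x y where z: "z = (x,y)" "x^2 + y^2 = 1" "f x y = 0" by auto
      show "z \<in> insert (-1, 0) (psi ` {t. (\<Sum>i\<le>4. c i * t^i) = 0})"
      proof (cases "x = -1")
        case True
        hence "y = 0" using z by simp
        thus ?thesis using True z by simp
      next
        case False
        let ?t = "y/(1+x)"
        have ps: "psi ?t = (x,y)" using circle_param[OF z(2) False] unfolding psi_def by simp
        have "(\<Sum>i\<le>4. c i * ?t^i) = 0" using key[of ?t] ps z by simp
        thus ?thesis using ps z by (auto intro!: image_eqI[where x = ?t])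
      qed
    qed
    hence "finite {(x,y). x^2 + y^2 = 1 \<and> f x y = 0}" using fin by (meson finite_imageI finite_insert finite_subset)
    thus False using inf by simp
  qed
  show ?thesis
  proof (intro allI impI)
    fix x y :: real assume xy: "x^2 + y^2 = 1"
    show "f x y = 0"
    proof (cases "x = -1")
      case True
      hence "y = 0" using xy by simp
      moreover have "c 4 = 0" using allc by simp
      ultimately show ?thesis using True unfolding f_def c_def by simp
    next
      case False
      let ?t = "y/(1+x)"
      have ps: "psi ?t = (x,y)" using circle_param[OF xy False] unfolding psi_def by simp
      have "f x y * (1 + ?t^2)^2 = 0" using key[of ?t] ps allc by simp
      moreover have "(1 + ?t^2)^2 \<noteq> 0" by (metis add_pos_nonneg zero_less_one zero_le_power2 less_irrefl power_not_zero)
      ultimately show ?thesis by simp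
    qed
  qed
qed

lemma plane_basis:
  fixes Z :: "'a::euclidean_space"
  assumes dim: "DIM('a) = 3" and unitZ: "norm Z = 1"
  obtains u1 u2 where "norm u1 = 1" "norm u2 = 1" "u1 \<bullet> u2 = 0" "Z \<bullet> u1 = 0" "Z \<bullet> u2 = 0"
    "\<And>d. Z \<bullet> d = 0 \<Longrightarrow> d = (d \<bullet> u1) *\<^sub>R u1 + (d \<bullet> u2) *\<^sub>R u2"
proof -
  have Z0: "Z \<noteq> 0" using unitZ by auto
  obtain B where B: "B \<subseteq> {x. Z \<bullet> x = 0}" "pairwise orthogonal B" "\<And>x. x \<in> B \<Longrightarrow> norm x = 1"
      "independent B" "card B = dim {x. Z \<bullet> x = 0}" "span B = {x. Z \<bullet> x = 0}"
    using orthonormal_basis_subspace[OF subspace_hyperplane[of Z]] by metis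
  have "card B = 2" using B(5) dim_hyperplane[OF Z0] dim by simp
  then obtain u1 u2 where u: "B = {u1, u2}" "u1 \<noteq> u2" by (auto simp: card_2_iff)
  have o: "u1 \<bullet> u2 = 0" using B(2) u unfolding pairwise_def orthogonal_def by auto
  have n1: "norm u1 = 1" and n2: "norm u2 = 1" using B(3) u by auto
  have z1: "Z \<bullet> u1 = 0" and z2: "Z \<bullet> u2 = 0" using B(1) u by auto
  have u11: "u1 \<bullet> u1 = 1" using n1 by (simp add: power2_norm_eq_inner[symmetric])
  have u22: "u2 \<bullet> u2 = 1" using n2 by (simp add: power2_norm_eq_inner[symmetric])
  show ?thesis
  proof (rule that[OF n1 n2 o z1 z2])
    fix d assume "Z \<bullet> d = 0"
    hence "d \<in> span {u1, u2}" using B(6) u by auto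
    then obtain a b where d: "d = a *\<^sub>R u1 + b *\<^sub>R u2"
      unfolding span_insert span_singleton by (auto simp: scaleR_conv_of_real) (metis add.commute diff_eq_eq)
    have "d \<bullet> u1 = a" using d o u11 by (simp add: inner_add_left inner_add_right inner_commute)
    moreover have "d \<bullet> u2 = b" using d o u22 by (simp add: inner_add_left inner_add_right inner_commute)
    ultimately show "d = (d \<bullet> u1) *\<^sub>R u1 + (d \<bullet> u2) *\<^sub>R u2" using d by simp
  qed
qed

lemma perp_exists:
  fixes Z u1 u2 w :: "'a::real_inner"
  assumes u: "norm u1 = 1" "norm u2 = 1" "u1 \<bullet> u2 = 0" "Z \<bullet> u1 = 0" "Z \<bullet> u2 = 0"
    and comp: "\<And>d. Z \<bullet> d = 0 \<Longrightarrow> d = (d \<bullet> u1) *\<^sub>R u1 + (d \<bullet> u2) *\<^sub>R u2"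
    and w: "Z \<bullet> w = 0"
  shows "\<exists>d. Z \<bullet> d = 0 \<and> w \<bullet> d = 0 \<and> d \<noteq> 0"
proof (cases "w \<bullet> u1 = 0 \<and> w \<bullet> u2 = 0")
  case True
  hence "w = 0" using comp[OF w] by simp
  thus ?thesis using u by (intro exI[of _ u1]) auto
next
  case False
  let ?d = "(w \<bullet> u2) *\<^sub>R u1 - (w \<bullet> u1) *\<^sub>R u2"
  have u11: "u1 \<bullet> u1 = 1" using u(1) by (simp add: power2_norm_eq_inner[symmetric])
  have u22: "u2 \<bullet> u2 = 1" using u(2) by (simp add: power2_norm_eq_inner[symmetric])
  have "Z \<bullet> ?d = 0" using u by (simp add: inner_diff_right)
  moreover have "w \<bullet> ?d = 0" by (simp add: inner_diff_right algebra_simps)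
  moreover have "?d \<noteq> 0"
  proof
    assume d0: "?d = 0"
    have "?d \<bullet> u1 = w \<bullet> u2" using u11 u(3) by (simp add: inner_diff_left inner_diff_right inner_commute)
    moreover have "?d \<bullet> u2 = - (w \<bullet> u1)" using u22 u(3) by (simp add: inner_diff_left inner_diff_right inner_commute)
    ultimately show False using d0 False by simp
  qed
  ultimately show ?thesis by blast
qed

lemma H_all:
  fixes Z u1 u2 A K G :: "'a::real_inner" and p bb :: real and D :: "'a set"
  defines "H \<equiv> \<lambda>d. p^2 + bb + 2*bb*(A \<bullet> d) - 2*p*(K \<bullet> d) + bb*(A \<bullet> d)^2 - 2*p*(A \<bullet> d)*(K \<bullet> d) - p^2*(G \<bullet> d)^2"
  assumes u: "norm u1 = 1" "norm u2 = 1" "u1 \<bullet> u2 = 0" "Z \<bullet> u1 = 0" "Z \<bullet> u2 = 0"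
    and comp: "\<And>d. Z \<bullet> d = 0 \<Longrightarrow> d = (d \<bullet> u1) *\<^sub>R u1 + (d \<bullet> u2) *\<^sub>R u2"
    and D: "D \<subseteq> {d. Z \<bullet> d = 0 \<and> norm d = 1 \<and> H d = 0}" "infinite D"
  shows "\<forall>d. Z \<bullet> d = 0 \<and> norm d = 1 \<longrightarrow> H d = 0"
proof -
  have u11: "u1 \<bullet> u1 = 1" using u(1) by (simp add: power2_norm_eq_inner[symmetric])
  have u22: "u2 \<bullet> u2 = 1" using u(2) by (simp add: power2_norm_eq_inner[symmetric])
  define a1 where "a1 = A \<bullet> u1" define a2 where "a2 = A \<bullet> u2"
  define z1 where "z1 = K \<bullet> u1" define z2 where "z2 = K \<bullet> u2"
  define e1 where "e1 = G \<bullet> u1" define e2 where "e2 = G \<bullet> u2"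
  define f where "f = (\<lambda>x y. (p^2 + bb) + (2*bb*a1 - 2*p*z1)*x + (2*bb*a2 - 2*p*z2)*y
      + (bb*a1^2 - 2*p*a1*z1 - p^2*e1^2)*x^2 + (2*bb*a1*a2 - 2*p*(a1*z2 + a2*z1) - 2*p^2*e1*e2)*x*y
      + (bb*a2^2 - 2*p*a2*z2 - p^2*e2^2)*y^2)"
  have Hf: "H (x *\<^sub>R u1 + y *\<^sub>R u2) = f x y" for x y
    unfolding H_def f_def a1_def a2_def z1_def z2_def e1_def e2_def
    by (simp add: inner_add_right algebra_simps power2_eq_square)
  have nrm: "(d \<bullet> u1)^2 + (d \<bullet> u2)^2 = 1" if "Z \<bullet> d = 0" "norm d = 1" for d
  proof -
    have "1 = d \<bullet> d" using that(2) by (simp add: power2_norm_eq_inner[symmetric])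
    also have "\<dots> = ((d \<bullet> u1) *\<^sub>R u1 + (d \<bullet> u2) *\<^sub>R u2) \<bullet> ((d \<bullet> u1) *\<^sub>R u1 + (d \<bullet> u2) *\<^sub>R u2)"
      using comp[OF that(1)] by simp
    also have "\<dots> = (d \<bullet> u1)^2 + (d \<bullet> u2)^2"
      using u11 u22 u(3) by (simp add: inner_add_left inner_add_right inner_commute power2_eq_square)
    finally show ?thesis by simp
  qed
  let ?phi = "\<lambda>d. (d \<bullet> u1, d \<bullet> u2)"
  have inj: "inj_on ?phi D"
  proof (rule inj_onI)
    fix d d' assume "d \<in> D" "d' \<in> D" "?phi d = ?phi d'"
    hence e: "d \<bullet> u1 = d' \<bullet> u1" "d \<bullet> u2 = d' \<bullet> u2" by auto
    have "Z \<bullet> d = 0" "Z \<bullet> d' = 0" using D(1) \<open>d \<in> D\<close> \<open>d' \<in> D\<close> by auto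
    hence "d = (d \<bullet> u1) *\<^sub>R u1 + (d \<bullet> u2) *\<^sub>R u2" "d' = (d' \<bullet> u1) *\<^sub>R u1 + (d' \<bullet> u2) *\<^sub>R u2"
      using comp by blast+
    thus "d = d'" using e by simp
  qed
  have "?phi ` D \<subseteq> {(x,y). x^2 + y^2 = 1 \<and> f x y = 0}"
  proof
    fix z assume "z \<in> ?phi ` D"
    then obtain d where d: "d \<in> D" "z = ?phi d" by auto
    have dd: "Z \<bullet> d = 0" "norm d = 1" "H d = 0" using D(1) d(1) by auto
    have "f (d \<bullet> u1) (d \<bullet> u2) = 0" using Hf[of "d \<bullet> u1" "d \<bullet> u2"] comp[OF dd(1)] dd(3) by simp
    thus "z \<in> {(x,y). x^2 + y^2 = 1 \<and> f x y = 0}" using nrm[OF dd(1,2)] d(2) by simp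
  qed
  moreover have "infinite (?phi ` D)" using D(2) inj finite_imageD by blast
  ultimately have "infinite {(x,y). x^2 + y^2 = 1 \<and> f x y = 0}" using finite_subset by blast
  hence all: "\<forall>x y. x^2 + y^2 = 1 \<longrightarrow> f x y = 0"
    using circle_quad[of "p^2 + bb" "2*bb*a1 - 2*p*z1" "2*bb*a2 - 2*p*z2" "bb*a1^2 - 2*p*a1*z1 - p^2*e1^2"
        "2*bb*a1*a2 - 2*p*(a1*z2 + a2*z1) - 2*p^2*e1*e2" "bb*a2^2 - 2*p*a2*z2 - p^2*e2^2"]
    unfolding f_def by simp
  show ?thesis
  proof (intro allI impI)
    fix d assume d: "Z \<bullet> d = 0 \<and> norm d = 1"
    have "H d = f (d \<bullet> u1) (d \<bullet> u2)" using Hf[of "d \<bullet> u1" "d \<bullet> u2"] comp d by simp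
    thus "H d = 0" using all nrm d by simp
  qed
qed

lemma final_alg:
  fixes ep n p a al :: real
  assumes "ep^2 = 1" "0 \<le> n" "n < 1" "p > 0" "a > 0"
    and e1: "al = a*(1-n) + (p*ep + al)*n"
    and e2: "(p*ep + al)^2*n - al^2 = -(p^2)"
  shows "p = a*(1-n)"
proof -
  have X: "al*(1-n) = a*(1-n) + p*ep*n" using e1 by (simp add: algebra_simps)
  have Y: "(p*ep + al)*(1-n) = p*ep + a*(1-n)" using X by (simp add: algebra_simps)
  have "((p*ep + al)*(1-n))^2*n - (al*(1-n))^2 = -(p^2*(1-n)^2)"
  proof -
    have "((p*ep + al)*(1-n))^2*n - (al*(1-n))^2 = ((p*ep + al)^2*n - al^2)*(1-n)^2"
      by algebra
    thus ?thesis using e2 by simp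
  qed
  hence "(p*ep + a*(1-n))^2*n - (a*(1-n) + p*ep*n)^2 = -(p^2*(1-n)^2)" unfolding X Y .
  hence "(1-n) * (p^2*n - a^2*(1-n)^2 + p^2*(1-n)) = 0"
    using assms(1) by algebra
  hence "p^2*n - a^2*(1-n)^2 + p^2*(1-n) = 0" using assms(3) by simp
  hence "p^2 = (a*(1-n))^2" by algebra
  moreover have "a*(1-n) > 0" using assms(3,5) by simp
  ultimately show ?thesis using assms(4) by (simp add: power2_eq_iff)
qed

lemma G3:
  fixes Z u1 u2 A c G :: "'a::real_inner" and p a e al :: real
  defines "bb \<equiv> c \<bullet> c - al^2"
  defines "K \<equiv> c + al *\<^sub>R G"
  defines "H \<equiv> \<lambda>d. p^2 + bb + 2*bb*(A \<bullet> d) - 2*p*(K \<bullet> d) + bb*(A \<bullet> d)^2 - 2*p*(A \<bullet> d)*(K \<bullet> d) - p^2*(G \<bullet> d)^2"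
  assumes u: "norm u1 = 1" "norm u2 = 1" "u1 \<bullet> u2 = 0" "Z \<bullet> u1 = 0" "Z \<bullet> u2 = 0"
    and comp: "\<And>d. Z \<bullet> d = 0 \<Longrightarrow> d = (d \<bullet> u1) *\<^sub>R u1 + (d \<bullet> u2) *\<^sub>R u2"
    and pa: "a > 0" "0 \<le> e" "e < 1" "p > 0"
    and pl: "Z \<bullet> A = 0" "Z \<bullet> G = 0" "Z \<bullet> c = 0"
    and GG: "G \<bullet> G = e^2"
    and aldef: "al = a*(1-e^2) - c \<bullet> G"
    and H0: "\<forall>d. Z \<bullet> d = 0 \<and> norm d = 1 \<longrightarrow> H d = 0"
  shows "p = a*(1-e^2) \<and> A \<bullet> A = e^2"
proof -
  have u11: "u1 \<bullet> u1 = 1" using u(1) by (simp add: power2_norm_eq_inner[symmetric])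
  have pK: "Z \<bullet> K = 0" using pl unfolding K_def by (simp add: inner_add_right)
  define V where "V = bb *\<^sub>R A - p *\<^sub>R K"
  have pV: "Z \<bullet> V = 0" using pl pK unfolding V_def by (simp add: inner_diff_right)
  have HH: "H d = 0 \<and> H (-d) = 0" if "Z \<bullet> d = 0" "norm d = 1" for d
    using H0 that by simp
  have Vd: "V \<bullet> d = 0" if "Z \<bullet> d = 0" "norm d = 1" for d
  proof -
    have "H d - H (-d) = 4 * (V \<bullet> d)" unfolding H_def V_def by (simp add: inner_diff_left algebra_simps)
    thus ?thesis using HH[OF that] by simp
  qed
  have V0: "V = 0"
  proof (rule ccontr)
    assume "V \<noteq> 0"
    hence "V \<bullet> (V /\<^sub>R norm V) = norm V" by (simp add: power2_norm_eq_inner[symmetric] power2_eq_square)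
    moreover have "Z \<bullet> (V /\<^sub>R norm V) = 0" using pV by simp
    moreover have "norm (V /\<^sub>R norm V) = 1" using \<open>V \<noteq> 0\<close> by simp
    ultimately show False using Vd \<open>V \<noteq> 0\<close> by fastforce
  qed
  have Fu: "p^2 + bb - bb*(A \<bullet> d)^2 - p^2*(G \<bullet> d)^2 = 0" if "Z \<bullet> d = 0" "norm d = 1" for d
  proof -
    have "p * (K \<bullet> d) = bb * (A \<bullet> d)" using V0 unfolding V_def
      by (metis inner_diff_left inner_scaleR_left eq_iff_diff_eq_0 inner_zero_left)
    moreover have "H d + H (-d) = 2*(p^2 + bb + bb*(A \<bullet> d)^2 - 2*(A \<bullet> d)*(p*(K \<bullet> d)) - p^2*(G \<bullet> d)^2)"
      unfolding H_def by (simp add: algebra_simps)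
    ultimately show ?thesis using HH[OF that] by (simp add: algebra_simps power2_eq_square)
  qed
  have Fq: "(p^2 + bb)*(x \<bullet> x) - bb*(A \<bullet> x)^2 - p^2*(G \<bullet> x)^2 = 0" if "Z \<bullet> x = 0" for x
  proof (cases "x = 0")
    case True thus ?thesis by simp
  next
    case False
    let ?d = "x /\<^sub>R norm x"
    have h1: "p^2 + bb - bb*(A \<bullet> ?d)^2 - p^2*(G \<bullet> ?d)^2 = 0" using Fu[of ?d] that False by simp
    have h2: "(p^2 + bb - bb*(A \<bullet> ?d)^2 - p^2*(G \<bullet> ?d)^2) * (norm x)^2
        = (p^2 + bb)*(x \<bullet> x) - bb*(A \<bullet> x)^2 - p^2*(G \<bullet> x)^2"
      using False by (simp add: power2_norm_eq_inner[symmetric] field_simps power2_eq_square)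
    show ?thesis using h2 unfolding h1 by simp
  qed
  define m where "m = A \<bullet> A"
  define n where "n = G \<bullet> G"
  define g where "g = A \<bullet> G"
  have n_e: "n = e^2" using GG n_def by simp
  have n1: "n < 1" "0 \<le> n" using pa n_e by (simp_all add: power_less_one_iff abs_less_iff)
  have Eq1: "(p^2 + bb)*m - bb*m^2 - p^2*g^2 = 0" using Fq[of A] pl unfolding m_def g_def
    by (simp add: power2_eq_square inner_commute)
  have Eq2: "(p^2 + bb)*n - bb*g^2 - p^2*n^2 = 0" using Fq[of G] pl unfolding n_def g_def
    by (simp add: power2_eq_square inner_commute)
  have Eq12: "(p^2 + bb)*(m + 2*g + n) - bb*(m+g)^2 - p^2*(g+n)^2 = 0"
    using Fq[of "A + G"] pl unfolding m_def n_def g_def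
    by (simp add: inner_add_left inner_add_right inner_commute algebra_simps)
  have Eq3: "g * (p^2 + bb - bb*m - p^2*n) = 0"
  proof -
    have "(p^2 + bb)*(m + 2*g + n) - bb*(m+g)^2 - p^2*(g+n)^2
       - ((p^2 + bb)*m - bb*m^2 - p^2*g^2) - ((p^2 + bb)*n - bb*g^2 - p^2*n^2) = 2 * (g * (p^2 + bb - bb*m - p^2*n))"
      by algebra
    thus ?thesis using Eq1 Eq2 Eq12 by simp
  qed
  have p2: "p^2 > 0" using pa by simp
  have key: "bb = -(p^2) \<and> (\<exists>ep. ep^2 = 1 \<and> A = ep *\<^sub>R G)"
  proof (cases "g = 0")
    case False
    have s1: "p^2 + bb = bb*m + p^2*n"
    proof -
      have "p^2 + bb - bb*m - p^2*n = 0" using Eq3 False by simp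
      thus ?thesis by simp
    qed
    have "p^2 * (n*m - g^2) = 0" using Eq1 unfolding s1 by algebra
    hence gnm: "g^2 = n*m" using p2 by simp
    have nz: "n \<noteq> 0" using False unfolding n_def g_def by auto
    have AG: "A = (g/n) *\<^sub>R G"
    proof -
      have "(A - (g/n) *\<^sub>R G) \<bullet> (A - (g/n) *\<^sub>R G) = m - 2*(g/n)*g + (g/n)^2*n"
        unfolding m_def n_def g_def by (simp add: inner_diff_left inner_diff_right inner_commute algebra_simps power2_eq_square)
      also have "\<dots> = m - g^2/n" using nz by (simp add: field_simps power2_eq_square)
      also have "\<dots> = 0" using gnm nz by simp
      finally show ?thesis by simp
    qed
    obtain d where d: "Z \<bullet> d = 0" "G \<bullet> d = 0" "d \<noteq> 0" using perp_exists[OF u comp pl(2)] by blast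
    have "A \<bullet> d = 0" using d AG by simp
    hence "(p^2 + bb) * (d \<bullet> d) = 0" using Fq[OF d(1)] d by simp
    hence bbv: "bb = -(p^2)" using d(3) by simp
    hence "m = n" using s1 p2 by (simp add: algebra_simps)
    hence "(g/n)^2 = 1" using gnm nz by (simp add: power_divide power2_eq_square)
    thus ?thesis using bbv AG by blast
  next
    case True
    have E1: "(p^2 + bb)*m = bb*m^2" using Eq1 True by simp
    have E2: "(p^2 + bb)*n = p^2*n^2" using Eq2 True by simp
    have n0: "n = 0"
    proof (rule ccontr)
      assume nz: "n \<noteq> 0"
      hence s: "p^2 + bb = p^2*n" using E2 by (simp add: power2_eq_square)
      obtain d where d: "Z \<bullet> d = 0" "G \<bullet> d = 0" "d \<noteq> 0" using perp_exists[OF u comp pl(2)] by blast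
      have Fd: "p^2*n*(d \<bullet> d) = bb*(A \<bullet> d)^2" using Fq[OF d(1)] d s by simp
      show False
      proof (cases "m = 0")
        case True
        hence "A = 0" unfolding m_def by simp
        hence "p^2*n*(d \<bullet> d) = 0" using Fd by simp
        thus False using p2 nz d(3) by simp
      next
        case False
        have "p^2*n*m = bb*m^2" using E1 s by simp
        hence "p^2*n = bb*m" using False by (simp add: power2_eq_square)
        moreover have "m > 0" using False unfolding m_def by simp
        moreover have "n > 0" using nz n1 by simp
        ultimately have "bb > 0" using p2 by (metis mult_pos_pos zero_less_mult_pos2)
        moreover have "bb = p^2*n - p^2" using s by simp
        moreover have "p^2*n < p^2" using n1 p2 by simp
        ultimately show False by simp
      qed
    qed
    hence G0: "G = 0" unfolding n_def by simp
    have m0: "m = 0"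
    proof (rule ccontr)
      assume mz: "m \<noteq> 0"
      obtain d where d: "Z \<bullet> d = 0" "A \<bullet> d = 0" "d \<noteq> 0" using perp_exists[OF u comp pl(1)] by blast
      have "(p^2 + bb)*(d \<bullet> d) = 0" using Fq[OF d(1)] d G0 by simp
      hence "bb = -(p^2)" using d(3) by simp
      hence "p^2 * m^2 = 0" using E1 by simp
      thus False using p2 mz by simp
    qed
    hence A0: "A = 0" unfolding m_def by simp
    have "(p^2 + bb) = 0" using Fq[OF u(4)] u11 A0 G0 u(4)
      by (simp add: inner_commute)
    hence "bb = -(p^2)" by simp
    thus ?thesis using A0 G0 by (intro conjI exI[of _ 1]) auto
  qed
  then obtain ep where bbv: "bb = -(p^2)" and ep: "ep^2 = 1" "A = ep *\<^sub>R G" by blast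
  have "bb *\<^sub>R A = p *\<^sub>R K" using V0 unfolding V_def by simp
  hence "(-(p^2) * ep) *\<^sub>R G = p *\<^sub>R (c + al *\<^sub>R G)" using bbv ep unfolding K_def by simp
  hence "p *\<^sub>R ((-(p * ep)) *\<^sub>R G) = p *\<^sub>R (c + al *\<^sub>R G)" by (simp add: power2_eq_square mult.assoc)
  hence "(-(p * ep)) *\<^sub>R G = c + al *\<^sub>R G" using pa(4) by (metis scaleR_cancel_left less_irrefl)
  hence "c = (-(p*ep)) *\<^sub>R G - al *\<^sub>R G" by (metis eq_diff_eq)
  moreover have "(-(p*ep + al)) *\<^sub>R G = (-(p*ep)) *\<^sub>R G - al *\<^sub>R G" by (simp add: algebra_simps)
  ultimately have cv: "c = (-(p*ep + al)) *\<^sub>R G" by simp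
  have e1: "al = a*(1-n) + (p*ep + al)*n" using aldef n_e cv unfolding n_def by (simp add: algebra_simps)
  have e2: "(p*ep + al)^2*n - al^2 = -(p^2)"
  proof -
    have "c \<bullet> c = (p*ep + al)^2*n"
      unfolding cv n_def by (simp add: power2_eq_square algebra_simps)
    thus ?thesis using bbv unfolding bb_def by simp
  qed
  have "p = a*(1-n)" by (rule final_alg[OF ep(1) n1(2) n1(1) pa(4) pa(1) e1 e2])
  moreover have "A \<bullet> A = e^2" using ep n_e unfolding n_def by (simp add: power2_eq_square[symmetric])
  ultimately show ?thesis using n_e by simp
qed

lemma ell_affine:
  fixes x c1 c2 :: "'a::real_inner"
  assumes "a > 0" "norm (x - c1) + norm (x - c2) = 2*a"
  shows "norm (x - c2) = (4*a^2 + c2 \<bullet> c2 - c1 \<bullet> c1)/(4*a) + ((1/(2*a)) *\<^sub>R (c1 - c2)) \<bullet> x"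
proof -
  have n12: "norm (x - c1) = 2*a - norm (x - c2)" using assms(2) by simp
  have e: "norm (x - c1)^2 = 4*a^2 - 4*a*norm (x - c2) + norm (x - c2)^2"
    unfolding n12 by (simp add: power2_eq_square algebra_simps)
  have n1: "norm (x - c1)^2 = x \<bullet> x - 2*(c1 \<bullet> x) + c1 \<bullet> c1"
    unfolding power2_norm_eq_inner by (simp add: inner_diff_left inner_diff_right inner_commute)
  have n2: "norm (x - c2)^2 = x \<bullet> x - 2*(c2 \<bullet> x) + c2 \<bullet> c2"
    unfolding power2_norm_eq_inner by (simp add: inner_diff_left inner_diff_right inner_commute)
  have "4*a*norm (x - c2) = 4*a^2 + 2*((c1 - c2) \<bullet> x) + c2 \<bullet> c2 - c1 \<bullet> c1"
    using e unfolding n1 n2 by (simp add: inner_diff_left algebra_simps)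
  hence N: "norm (x - c2) = (4*a^2 + 2*((c1 - c2) \<bullet> x) + c2 \<bullet> c2 - c1 \<bullet> c1)/(4*a)"
    using assms(1) by (simp add: eq_divide_eq mult.commute)
  have "(4*a^2 + c2 \<bullet> c2 - c1 \<bullet> c1)/(4*a) + ((1/(2*a)) *\<^sub>R (c1 - c2)) \<bullet> x
     = (4*a^2 + 2*((c1 - c2) \<bullet> x) + c2 \<bullet> c2 - c1 \<bullet> c1)/(4*a)"
  proof -
    have "((1/(2*a)) *\<^sub>R (c1 - c2)) \<bullet> x = ((c1 - c2) \<bullet> x)/(2*a)" by simp
    thus ?thesis using assms(1) by (simp add: field_simps)
  qed
  thus ?thesis using N by simp
qed

lemma conn_finite_const:
  fixes f :: "real \<Rightarrow> 'b::metric_space"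
  assumes "continuous_on {t0<..<t1} f" "\<And>t. t \<in> {t0<..<t1} \<Longrightarrow> f t \<in> F" "finite F"
  shows "\<exists>c. \<forall>t\<in>{t0<..<t1}. f t = c"
proof -
  have "connected (f ` {t0<..<t1})" by (rule connected_continuous_image[OF assms(1)]) simp
  moreover have "finite (f ` {t0<..<t1})" using assms(2,3) by (meson finite_subset image_subsetI)
  ultimately have "f ` {t0<..<t1} = {} \<or> (\<exists>a. f ` {t0<..<t1} = {a})"
    using connected_finite_iff_sing by blast
  thus ?thesis by auto
qed

lemma Q_not_const:
  fixes Qf Wf :: "real \<Rightarrow> 'a::real_normed_vector" and al :: "real \<Rightarrow> real"
  assumes t01: "t0 < t1"
    and dQ: "\<And>t. t \<in> {t0<..<t1} \<Longrightarrow> (Qf has_vector_derivative al t *\<^sub>R Wf t) (at t)"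
    and dW: "\<And>t. t \<in> {t0<..<t1} \<Longrightarrow> (Wf has_vector_derivative (- (al t / norm (Qf t) ^ 3)) *\<^sub>R Qf t) (at t)"
    and alp: "\<And>t. t \<in> {t0<..<t1} \<Longrightarrow> al t > 0"
    and nz: "\<And>t. t \<in> {t0<..<t1} \<Longrightarrow> Qf t \<noteq> 0"
    and c: "\<forall>t\<in>{t0<..<t1}. Qf t = c"
  shows False
proof -
  let ?I = "{t0<..<t1}"
  have W0: "Wf t = 0" if t: "t \<in> ?I" for t
  proof -
    have "((\<lambda>t. c) has_vector_derivative 0) (at t)" by simp
    hence "(Qf has_vector_derivative 0) (at t)"
      by (rule has_vector_derivative_transform_within_open[where S = ?I]) (use t c in auto)
    hence "al t *\<^sub>R Wf t = 0" using vector_derivative_unique_at dQ[OF t] by blast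
    thus ?thesis using alp[OF t] by simp
  qed
  obtain t where t: "t \<in> ?I" using t01 dense by (metis greaterThanLessThan_iff)
  have "((\<lambda>t. 0) has_vector_derivative 0) (at t)" by simp
  hence "(Wf has_vector_derivative 0) (at t)"
    by (rule has_vector_derivative_transform_within_open[where S = ?I]) (use t W0 in auto)
  hence "(- (al t / norm (Qf t) ^ 3)) *\<^sub>R Qf t = 0" using vector_derivative_unique_at dW[OF t] by blast
  thus False using alp[OF t] nz[OF t] by simp
qed

lemma polyq: "(\<Sum>i\<le>2. [C - A^2, -2*X - 2*A*g, 1 - g^2] ! i * r^i) = r^2 - 2*r*X + C - (A + r*g)^2"
  for C X A g r :: real
  by (simp add: eval_nat_numeral algebra_simps power2_eq_square)

lemma ray_finite:
  fixes d0 c1 c2 :: "'a::real_inner"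
  assumes "a > 0" "e < 1" "dist c1 c2 = 2*a*e" "norm d0 = 1"
  shows "finite {r. norm (r *\<^sub>R d0 - c1) + norm (r *\<^sub>R d0 - c2) = 2*a}"
proof -
  let ?al = "(4*a^2 + c2 \<bullet> c2 - c1 \<bullet> c1)/(4*a)" and ?G = "(1/(2*a)) *\<^sub>R (c1 - c2)"
  define k where "k = (\<lambda>i::nat. [c2 \<bullet> c2 - ?al^2, -2*(c2 \<bullet> d0) - 2*?al*(?G \<bullet> d0), 1 - (?G \<bullet> d0)^2] ! i)"
  have nG: "norm ?G = e" using assms(1,3) by (simp add: dist_norm norm_minus_commute)
  have "\<bar>?G \<bullet> d0\<bar> \<le> e" using Cauchy_Schwarz_ineq2[of ?G d0] nG assms(4) by simp
  hence "(?G \<bullet> d0)^2 < 1"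
    using assms(2) by (simp add: abs_square_less_1)
  hence k2: "k 2 \<noteq> 0" unfolding k_def by simp
  have fin: "finite {r. (\<Sum>i\<le>2. k i * r^i) = 0}" by (rule polyfun_roots_finite[of k 2 2, OF k2]) simp
  have "{r. norm (r *\<^sub>R d0 - c1) + norm (r *\<^sub>R d0 - c2) = 2*a} \<subseteq> {r. (\<Sum>i\<le>2. k i * r^i) = 0}"
  proof
    fix r assume "r \<in> {r. norm (r *\<^sub>R d0 - c1) + norm (r *\<^sub>R d0 - c2) = 2*a}"
    hence "norm (r *\<^sub>R d0 - c1) + norm (r *\<^sub>R d0 - c2) = 2*a" by simp
    hence "norm (r *\<^sub>R d0 - c2) = ?al + ?G \<bullet> (r *\<^sub>R d0)" by (rule ell_affine[OF assms(1)])
    hence "norm (r *\<^sub>R d0 - c2)^2 = (?al + r * (?G \<bullet> d0))^2" by simp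
    moreover have "norm (r *\<^sub>R d0 - c2)^2 = r^2 - 2*r*(c2 \<bullet> d0) + c2 \<bullet> c2"
    proof -
      have dd: "d0 \<bullet> d0 = 1" using assms(4) by (simp add: power2_norm_eq_inner[symmetric])
      have "norm (r *\<^sub>R d0 - c2)^2 = (r *\<^sub>R d0 - c2) \<bullet> (r *\<^sub>R d0 - c2)" by (rule power2_norm_eq_inner)
      also have "\<dots> = r^2 - 2*r*(c2 \<bullet> d0) + c2 \<bullet> c2"
        by (simp add: inner_diff_left inner_diff_right inner_commute dd power2_eq_square algebra_simps)
      finally show ?thesis .
    qed
    ultimately have "r^2 - 2*r*(c2 \<bullet> d0) + c2 \<bullet> c2 - (?al + r * (?G \<bullet> d0))^2 = 0" by simp
    moreover have "(\<Sum>i\<le>2. k i * r^i) = r^2 - 2*r*(c2 \<bullet> d0) + c2 \<bullet> c2 - (?al + r * (?G \<bullet> d0))^2"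
      unfolding k_def by (rule polyq)
    ultimately show "r \<in> {r. (\<Sum>i\<le>2. k i * r^i) = 0}" by simp
  qed
  thus ?thesis using fin finite_subset by blast
qed

lemma qv_zero:
  fixes q v :: "real \<Rightarrow> 'a::real_inner"
  assumes "\<And>t. t \<in> {t0<..<t1} \<Longrightarrow> norm (q t) = R"
    and "\<And>t. t \<in> {t0<..<t1} \<Longrightarrow> (q has_vector_derivative v t) (at t)"
    and t: "t \<in> {t0<..<t1}"
  shows "q t \<bullet> v t = 0"
proof -
  have d1: "((\<lambda>t. q t \<bullet> q t) has_real_derivative (q t \<bullet> v t + v t \<bullet> q t)) (at t)"
    by (rule inner_deriv[OF assms(2)[OF t] assms(2)[OF t]])
  have "((\<lambda>t. R^2) has_real_derivative 0) (at t)" by simp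
  hence "((\<lambda>t. q t \<bullet> q t) has_real_derivative 0) (at t)"
    unfolding has_real_derivative_iff_has_vector_derivative
    by (rule has_vector_derivative_transform_within_open[where S = "{t0<..<t1}"])
       (use t assms(1) in \<open>auto simp: power2_norm_eq_inner[symmetric]\<close>)
  hence "q t \<bullet> v t + v t \<bullet> q t = 0" using d1 DERIV_unique by blast
  thus ?thesis by (simp add: inner_commute)
qed

lemma dir_const:
  fixes Qf Wf :: "real \<Rightarrow> 'a::real_inner" and al :: "real \<Rightarrow> real"
  assumes dQ: "\<And>t. t \<in> {t0<..<t1} \<Longrightarrow> (Qf has_vector_derivative al t *\<^sub>R Wf t) (at t)"
    and nz: "\<And>t. t \<in> {t0<..<t1} \<Longrightarrow> Qf t \<noteq> 0"
    and L0: "\<And>t. t \<in> {t0<..<t1} \<Longrightarrow> (Qf t \<bullet> Qf t) * (Wf t \<bullet> Wf t) - (Qf t \<bullet> Wf t)^2 = 0"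
  obtains d0 where "\<And>t. t \<in> {t0<..<t1} \<Longrightarrow> (1 / norm (Qf t)) *\<^sub>R Qf t = d0"
proof -
  let ?I = "{t0<..<t1}"
  have deriv: "\<And>t. t \<in> ?I \<Longrightarrow> ((\<lambda>t. (1 / norm (Qf t)) *\<^sub>R Qf t) has_vector_derivative 0) (at t within ?I)"
  proof -
    fix t assume t: "t \<in> ?I"
    let ?q = "Qf t" and ?w = "Wf t" and ?r = "norm (Qf t)" and ?a = "al t"
    have rpos: "?r > 0" using nz[OF t] by simp
    have nd: "((\<lambda>t. norm (Qf t)) has_real_derivative (?q \<bullet> (?a *\<^sub>R ?w)) / ?r) (at t)"
      by (rule norm_deriv[OF dQ[OF t] nz[OF t]])
    have ir: "((\<lambda>t. 1 / norm (Qf t)) has_real_derivative (- ((?q \<bullet> (?a *\<^sub>R ?w)) / ?r) / ?r^2)) (at t)"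
      using DERIV_inverse_fun[OF nd] rpos by (simp add: inverse_eq_divide power2_eq_square)
    have D: "((\<lambda>t. (1 / norm (Qf t)) *\<^sub>R Qf t) has_vector_derivative
        (1 / ?r) *\<^sub>R (?a *\<^sub>R ?w) + (- ((?q \<bullet> (?a *\<^sub>R ?w)) / ?r) / ?r^2) *\<^sub>R ?q) (at t)"
      by (rule has_vector_derivative_scaleR[OF ir dQ[OF t]])
    have qq: "?q \<bullet> ?q = ?r^2" by (simp add: power2_norm_eq_inner)
    have Z: "?r^2 *\<^sub>R ?w - (?q \<bullet> ?w) *\<^sub>R ?q = 0"
    proof -
      have "(?r^2 *\<^sub>R ?w - (?q \<bullet> ?w) *\<^sub>R ?q) \<bullet> (?r^2 *\<^sub>R ?w - (?q \<bullet> ?w) *\<^sub>R ?q)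
          = ?r^2 * ((?q \<bullet> ?q) * (?w \<bullet> ?w) - (?q \<bullet> ?w)^2)"
        unfolding qq[symmetric] by (simp add: inner_diff_left inner_diff_right inner_commute algebra_simps power2_eq_square)
      also have "\<dots> = 0" using L0[OF t] by simp
      finally show ?thesis by simp
    qed
    have "(1 / ?r) *\<^sub>R (?a *\<^sub>R ?w) + (- ((?q \<bullet> (?a *\<^sub>R ?w)) / ?r) / ?r^2) *\<^sub>R ?q
        = (?a / ?r^3) *\<^sub>R (?r^2 *\<^sub>R ?w - (?q \<bullet> ?w) *\<^sub>R ?q)"
      using rpos by (simp add: algebra_simps power2_eq_square power3_eq_cube)
    hence "(1 / ?r) *\<^sub>R (?a *\<^sub>R ?w) + (- ((?q \<bullet> (?a *\<^sub>R ?w)) / ?r) / ?r^2) *\<^sub>R ?q = 0"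
      using Z by simp
    thus "((\<lambda>t. (1 / norm (Qf t)) *\<^sub>R Qf t) has_vector_derivative 0) (at t within ?I)"
      using D has_vector_derivative_at_within by fastforce
  qed
  then obtain c where "\<And>t. t \<in> ?I \<Longrightarrow> (1 / norm (Qf t)) *\<^sub>R Qf t = c"
    using has_vector_derivative_zero_constant[OF convex_real_interval(8) deriv] by blast
  thus ?thesis using that by blast
qed

lemma algA:
  fixes Q W :: "'a::real_inner"
  assumes "Q \<noteq> 0"
  defines "A \<equiv> (W \<bullet> W) *\<^sub>R Q - (Q \<bullet> W) *\<^sub>R W - (1 / norm Q) *\<^sub>R Q"
  shows "A \<bullet> Q = (Q \<bullet> Q) * (W \<bullet> W) - (Q \<bullet> W)^2 - norm Q"
    and "A \<bullet> A = 1 + (W \<bullet> W - 2 / norm Q) * ((Q \<bullet> Q) * (W \<bullet> W) - (Q \<bullet> W)^2)"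
proof -
  have r: "norm Q > 0" using assms by simp
  have qq: "Q \<bullet> Q = (norm Q)^2" by (simp add: power2_norm_eq_inner)
  show "A \<bullet> Q = (Q \<bullet> Q) * (W \<bullet> W) - (Q \<bullet> W)^2 - norm Q"
    unfolding A_def using r by (simp add: inner_diff_left inner_diff_right inner_commute qq power2_eq_square)
  show "A \<bullet> A = 1 + (W \<bullet> W - 2 / norm Q) * ((Q \<bullet> Q) * (W \<bullet> W) - (Q \<bullet> W)^2)"
    unfolding A_def using r
    by (simp add: inner_diff_left inner_diff_right inner_add_left inner_add_right inner_commute qq power2_eq_square field_simps)
qed

lemma H_point:
  fixes r w p al0 eta xi C :: real
  assumes "r*(1+w) = p" "(al0 + r*eta)^2 = r^2 - 2*r*xi + C"
  shows "p^2 + (C - al0^2) + 2*(C - al0^2)*w - 2*p*(xi + al0*eta) + (C - al0^2)*w^2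
     - 2*p*w*(xi + al0*eta) - p^2*eta^2 = 0"
proof -
  have "p^2 + (C - al0^2) + 2*(C - al0^2)*w - 2*p*(xi + al0*eta) + (C - al0^2)*w^2
     - 2*p*w*(xi + al0*eta) - p^2*eta^2 = (1+w)^2 * ((r^2 - 2*r*xi + C) - (al0 + r*eta)^2)"
    unfolding assms(1)[symmetric] by algebra
  thus ?thesis using assms(2) by simp
qed

theorem mainTheorem1:
  fixes Z :: "'a::euclidean_space" and R t0 t1 a e :: real
    and q v :: "real \<Rightarrow> 'a" and lam :: "real \<Rightarrow> real" and S :: "'a set"
  assumes dim: "DIM('a) = 3" and unitZ: "norm Z = 1" and Rpos: "R > 0" and t01: "t0 < t1"
    and onB: "\<forall>t\<in>{t0<..<t1}. norm (q t) = R \<and> hgt R Z (q t) > 0 \<and> q t \<noteq> R *\<^sub>R Z"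
    and vel: "\<forall>t\<in>{t0<..<t1}. (q has_vector_derivative v t) (at t)"
    and eqn: "\<forall>t\<in>{t0<..<t1}. (v has_vector_derivative
                 (bcoef R Z (q t) *\<^sub>R ZB R Z (q t) + lam t *\<^sub>R q t)) (at t)"
    and ell: "is_ellipse Z a e S"
    and orbit: "(\<lambda>t. Qproj R Z (q t)) ` {t0<..<t1} \<subseteq> S"
  shows "(\<forall>\<tau>. (\<forall>t\<in>{t0<..<t1}. (\<tau> has_real_derivative 1 / (hgt R Z (q t))^2) (at t)) \<longrightarrow>
            (\<exists>P'. \<forall>s\<in>\<tau> ` {t0<..<t1}.
               ((\<lambda>s. Qproj R Z (q (inv_into {t0<..<t1} \<tau> s))) has_vector_derivative P' s) (at s) \<and>
               (P' has_vector_derivative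
                  (- (1 / (norm (Qproj R Z (q (inv_into {t0<..<t1} \<tau> s))))^3)
                     *\<^sub>R Qproj R Z (q (inv_into {t0<..<t1} \<tau> s)))) (at s)))
         \<and> (\<forall>t\<in>{t0<..<t1}. energy R Z (q t) (v t) = - 1 / (2 * a) + a * (1 - e^2) / (2 * R^2))"
proof -
  let ?I = "{t0<..<t1}"
  define h where "h = (\<lambda>t. hgt R Z (q t))"
  define Qf where "Qf = (\<lambda>t. Qproj R Z (q t))"
  define Wf where "Wf = (\<lambda>t. h t *\<^sub>R v t - ((Z \<bullet> v t) / R) *\<^sub>R q t)"
  define al where "al = (\<lambda>t. 1 / (h t)^2)"
  have nq: "\<And>t. t \<in> ?I \<Longrightarrow> norm (q t) = R" using onB by blast
  have hp: "\<And>t. t \<in> ?I \<Longrightarrow> hgt R Z (q t) > 0" using onB by blast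
  have ne: "\<And>t. t \<in> ?I \<Longrightarrow> q t \<noteq> R *\<^sub>R Z" using onB by blast
  have dq: "\<And>t. t \<in> ?I \<Longrightarrow> (q has_vector_derivative v t) (at t)" using vel by blast
  have dv: "\<And>t. t \<in> ?I \<Longrightarrow> (v has_vector_derivative
                 (bcoef R Z (q t) *\<^sub>R ZB R Z (q t) + lam t *\<^sub>R q t)) (at t)" using eqn by blast
  have dQ: "(Qf has_vector_derivative al t *\<^sub>R Wf t) (at t)" if t: "t \<in> ?I" for t
    unfolding Qf_def Wf_def al_def h_def
    using kin(1)[of Z R q t v lam, OF unitZ Rpos nq[OF t] hp[OF t] ne[OF t] dq[OF t] dv[OF t]] by simp
  have dW: "(Wf has_vector_derivative (- (al t / norm (Qf t) ^ 3)) *\<^sub>R Qf t) (at t)" if t: "t \<in> ?I" for t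
    unfolding Qf_def Wf_def al_def h_def
    using kin(2)[of Z R q t v lam, OF unitZ Rpos nq[OF t] hp[OF t] ne[OF t] dq[OF t] dv[OF t]] by simp
  have alp: "\<And>t. t \<in> ?I \<Longrightarrow> al t > 0" unfolding al_def h_def using hp by (simp add: less_imp_neq[symmetric])
  have nz: "\<And>t. t \<in> ?I \<Longrightarrow> Qf t \<noteq> 0"
  proof -
    fix t assume t: "t \<in> ?I"
    have h1: "h t < 1" using hgt_bounds[OF unitZ Rpos nq[OF t] hp[OF t] ne[OF t]] h_def by simp
    have hp': "h t > 0" using hp[OF t] h_def by simp
    have s: "0 < 1 - (h t)^2" using h1 hp'
      by (simp add: power2_eq_square) (metis mult_strict_mono' less_eq_real_def mult_1)
    have "norm (Qf t)^2 = R^2 * (1 - (h t)^2) / (h t)^2"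
      using normQ[OF unitZ Rpos nq[OF t] hp[OF t]] unfolding Qf_def h_def by simp
    also have "\<dots> > 0" using s Rpos hp' by simp
    finally show "Qf t \<noteq> 0" by auto
  qed
  have P1: "\<forall>\<tau>. (\<forall>t\<in>?I. (\<tau> has_real_derivative 1 / (hgt R Z (q t))^2) (at t)) \<longrightarrow>
            (\<exists>P'. \<forall>s\<in>\<tau> ` ?I.
               ((\<lambda>s. Qproj R Z (q (inv_into ?I \<tau> s))) has_vector_derivative P' s) (at s) \<and>
               (P' has_vector_derivative
                  (- (1 / (norm (Qproj R Z (q (inv_into ?I \<tau> s))))^3)
                     *\<^sub>R Qproj R Z (q (inv_into ?I \<tau> s)))) (at s))"
  proof (intro allI impI)
    fix tau assume dt: "\<forall>t\<in>?I. (tau has_real_derivative 1 / (hgt R Z (q t))^2) (at t)"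
    have dt': "\<And>t. t \<in> ?I \<Longrightarrow> (tau has_real_derivative al t) (at t)"
      using dt unfolding al_def h_def by simp
    note tc = time_change[of t0 t1 tau al Qf Wf "\<lambda>t. norm (Qf t)", OF t01 dt' alp dQ dW]
    show "\<exists>P'. \<forall>s\<in>tau ` ?I.
               ((\<lambda>s. Qproj R Z (q (inv_into ?I tau s))) has_vector_derivative P' s) (at s) \<and>
               (P' has_vector_derivative
                  (- (1 / (norm (Qproj R Z (q (inv_into ?I tau s))))^3)
                     *\<^sub>R Qproj R Z (q (inv_into ?I tau s)))) (at s)"
      by (rule exI[of _ "\<lambda>s. Wf (inv_into ?I tau s)"]) (use tc in \<open>simp add: Qf_def\<close>)
  qed
  have qv: "q t \<bullet> v t = 0" if t: "t \<in> ?I" for t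
    by (rule qv_zero[OF nq dq t])
  have En: "energy R Z (q t) (v t) = 1/2 * (Wf t \<bullet> Wf t) - 1 / norm (Qf t)
      + ((Qf t \<bullet> Qf t) * (Wf t \<bullet> Wf t) - (Qf t \<bullet> Wf t)^2) / (2 * R^2)" if t: "t \<in> ?I" for t
    using energy_id[OF unitZ Rpos nq[OF t] hp[OF t] ne[OF t] qv[OF t] refl refl refl]
    unfolding Qf_def Wf_def h_def by simp
  have ZQ: "Z \<bullet> Qf t = 0" and ZW: "Z \<bullet> Wf t = 0" if t: "t \<in> ?I" for t
    using kin_inner[OF unitZ Rpos nq[OF t] hp[OF t] qv[OF t] refl refl refl]
    unfolding Qf_def Wf_def h_def by simp_all
  have "\<exists>c. \<forall>t\<in>?I. (Wf t \<bullet> Wf t) *\<^sub>R Qf t - (Qf t \<bullet> Wf t) *\<^sub>R Wf t - (1 / norm (Qf t)) *\<^sub>R Qf t = c"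
    by (rule conservation(1)[OF convex_real_interval(8) open_greaterThanLessThan dQ dW nz])
  then obtain Av where Av0: "\<forall>t\<in>?I. (Wf t \<bullet> Wf t) *\<^sub>R Qf t - (Qf t \<bullet> Wf t) *\<^sub>R Wf t - (1 / norm (Qf t)) *\<^sub>R Qf t = Av" ..
  hence Av: "\<And>t. t \<in> ?I \<Longrightarrow> (Wf t \<bullet> Wf t) *\<^sub>R Qf t - (Qf t \<bullet> Wf t) *\<^sub>R Wf t - (1 / norm (Qf t)) *\<^sub>R Qf t = Av"
    by (rule bspec)
  have "\<exists>c. \<forall>t\<in>?I. (Qf t \<bullet> Qf t) * (Wf t \<bullet> Wf t) - (Qf t \<bullet> Wf t)^2 = c"
    by (rule conservation(2)[OF convex_real_interval(8) open_greaterThanLessThan dQ dW nz])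
  then obtain p where pL0: "\<forall>t\<in>?I. (Qf t \<bullet> Qf t) * (Wf t \<bullet> Wf t) - (Qf t \<bullet> Wf t)^2 = p" ..
  hence pL: "\<And>t. t \<in> ?I \<Longrightarrow> (Qf t \<bullet> Qf t) * (Wf t \<bullet> Wf t) - (Qf t \<bullet> Wf t)^2 = p"
    by (rule bspec)
  have AQ: "Av \<bullet> Qf t = p - norm (Qf t)" if t: "t \<in> ?I" for t
    using algA(1)[OF nz[OF t], of "Wf t"] Av[OF t] pL[OF t] by simp
  have AA: "Av \<bullet> Av = 1 + (Wf t \<bullet> Wf t - 2 / norm (Qf t)) * p" if t: "t \<in> ?I" for t
    using algA(2)[OF nz[OF t], of "Wf t"] Av[OF t] pL[OF t] by simp
  obtain ts where ts: "ts \<in> ?I" using t01 by (metis dense greaterThanLessThan_iff)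
  have ZA: "Z \<bullet> Av = 0" using Av[OF ts, symmetric] ZQ[OF ts] ZW[OF ts]
    by (simp add: inner_diff_right)
  obtain c1 c2 where ae: "0 < a" "0 \<le> e" "e < 1" and cZ: "Z \<bullet> c1 = 0" "Z \<bullet> c2 = 0"
      and dc: "dist c1 c2 = 2 * a * e" and Sdef: "S = {x. Z \<bullet> x = 0 \<and> dist x c1 + dist x c2 = 2 * a}"
    using ell unfolding is_ellipse_def by blast
  have inS: "norm (Qf t - c1) + norm (Qf t - c2) = 2 * a" if t: "t \<in> ?I" for t
  proof -
    have "Qf t \<in> S" using orbit t unfolding Qf_def by (simp add: image_subset_iff)
    thus ?thesis unfolding Sdef by (simp add: dist_norm)
  qed
  have contQ: "continuous_on ?I Qf"
    by (rule continuous_at_imp_continuous_on) (use dQ has_vector_derivative_continuous in blast)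
  have nonradial: False if d0: "norm d0 = 1" and Qd: "\<And>t. t \<in> ?I \<Longrightarrow> Qf t = norm (Qf t) *\<^sub>R d0" for d0
  proof -
    have fin: "finite {r. norm (r *\<^sub>R d0 - c1) + norm (r *\<^sub>R d0 - c2) = 2*a}"
      by (rule ray_finite[OF ae(1) ae(3) dc d0])
    have "\<exists>c. \<forall>t\<in>?I. norm (Qf t) = c"
    proof (rule conn_finite_const[OF _ _ fin])
      show "continuous_on ?I (\<lambda>t. norm (Qf t))" by (intro continuous_intros contQ)
      fix t assume t: "t \<in> ?I"
      show "norm (Qf t) \<in> {r. norm (r *\<^sub>R d0 - c1) + norm (r *\<^sub>R d0 - c2) = 2*a}"
        using inS[OF t] Qd[OF t] by simp
    qed
    then obtain r0 where "\<forall>t\<in>?I. norm (Qf t) = r0" by blast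
    hence "\<forall>t\<in>?I. Qf t = r0 *\<^sub>R d0" using Qd by simp
    thus False using Q_not_const[where Qf=Qf and Wf=Wf and al=al and c="r0 *\<^sub>R d0", OF t01 dQ dW alp nz] by blast
  qed
  have ppos: "p > 0"
  proof -
    have "(Qf ts \<bullet> Wf ts)^2 \<le> (Qf ts \<bullet> Qf ts) * (Wf ts \<bullet> Wf ts)"
    proof -
      have "\<bar>Qf ts \<bullet> Wf ts\<bar> \<le> norm (Qf ts) * norm (Wf ts)" by (rule Cauchy_Schwarz_ineq2)
      hence "\<bar>Qf ts \<bullet> Wf ts\<bar>^2 \<le> (norm (Qf ts) * norm (Wf ts))^2"
        by (rule power_mono) simp
      thus ?thesis by (simp add: power_mult_distrib power2_norm_eq_inner)
    qed
    hence p0: "p \<ge> 0" using pL[OF ts] by simp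
    show "p > 0"
    proof (rule ccontr)
      assume "\<not> p > 0"
      hence "p = 0" using p0 by simp
      then obtain d0 where d0: "\<And>t. t \<in> ?I \<Longrightarrow> (1 / norm (Qf t)) *\<^sub>R Qf t = d0"
        using dir_const[OF dQ nz] pL by metis
      have "norm d0 = 1" using d0[OF ts] nz[OF ts] by auto
      moreover have "Qf t = norm (Qf t) *\<^sub>R d0" if t: "t \<in> ?I" for t
        using d0[OF t] nz[OF t] by auto
      ultimately show False by (rule nonradial)
    qed
  qed
  let ?D = "(\<lambda>t. (1 / norm (Qf t)) *\<^sub>R Qf t) ` ?I"
  have Dinf: "infinite ?D"
  proof
    assume fin: "finite ?D"
    have "\<exists>c. \<forall>t\<in>?I. (1 / norm (Qf t)) *\<^sub>R Qf t = c"
    proof (rule conn_finite_const[OF _ _ fin])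
      show "continuous_on ?I (\<lambda>t. (1 / norm (Qf t)) *\<^sub>R Qf t)"
        using nz by (intro continuous_intros contQ) auto
    qed auto
    then obtain d0 where d00: "\<forall>t\<in>?I. (1 / norm (Qf t)) *\<^sub>R Qf t = d0" by blast
    hence d0: "\<And>t. t \<in> ?I \<Longrightarrow> (1 / norm (Qf t)) *\<^sub>R Qf t = d0" by blast
    have "norm d0 = 1" using d0[OF ts] nz[OF ts] by auto
    moreover have "Qf t = norm (Qf t) *\<^sub>R d0" if t: "t \<in> ?I" for t
      using d0[OF t] nz[OF t] by auto
    ultimately show False by (rule nonradial)
  qed
  obtain u1 u2 where u: "norm u1 = 1" "norm u2 = 1" "u1 \<bullet> u2 = 0" "Z \<bullet> u1 = 0" "Z \<bullet> u2 = 0"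
    and comp: "\<And>d. Z \<bullet> d = 0 \<Longrightarrow> d = (d \<bullet> u1) *\<^sub>R u1 + (d \<bullet> u2) *\<^sub>R u2"
    using plane_basis[OF dim unitZ] by blast
  define al0 where "al0 = (4*a^2 + c2 \<bullet> c2 - c1 \<bullet> c1)/(4*a)"
  define G where "G = (1/(2*a)) *\<^sub>R (c1 - c2)"
  have HD: "?D \<subseteq> {d. Z \<bullet> d = 0 \<and> norm d = 1 \<and>
      p^2 + (c2 \<bullet> c2 - al0^2) + 2*(c2 \<bullet> c2 - al0^2)*(Av \<bullet> d) - 2*p*((c2 + al0 *\<^sub>R G) \<bullet> d)
      + (c2 \<bullet> c2 - al0^2)*(Av \<bullet> d)^2 - 2*p*(Av \<bullet> d)*((c2 + al0 *\<^sub>R G) \<bullet> d) - p^2*(G \<bullet> d)^2 = 0}"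
  proof
    fix d assume "d \<in> ?D"
    then obtain t where t: "t \<in> ?I" and dd: "d = (1 / norm (Qf t)) *\<^sub>R Qf t" by auto
    let ?r = "norm (Qf t)"
    have rp: "?r > 0" using nz[OF t] by simp
    have Qd: "Qf t = ?r *\<^sub>R d" using dd rp by simp
    have n1: "norm d = 1" using dd rp by simp
    have z: "Z \<bullet> d = 0" using dd ZQ[OF t] by simp
    have e1: "?r * (1 + Av \<bullet> d) = p"
    proof -
      have "Av \<bullet> Qf t = ?r * (Av \<bullet> d)" by (subst Qd) simp
      thus ?thesis using AQ[OF t] by (simp add: algebra_simps)
    qed
    have e2: "(al0 + ?r * (G \<bullet> d))^2 = ?r^2 - 2 * ?r * (c2 \<bullet> d) + c2 \<bullet> c2"
    proof -
      have "norm (Qf t - c2) = al0 + G \<bullet> Qf t"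
        unfolding al0_def G_def by (rule ell_affine[OF ae(1) inS[OF t]])
      hence "norm (Qf t - c2)^2 = (al0 + ?r * (G \<bullet> d))^2" by (subst (asm) (2) Qd) simp
      moreover have "norm (Qf t - c2)^2 = ?r^2 - 2 * ?r * (c2 \<bullet> d) + c2 \<bullet> c2"
      proof -
        have "norm (Qf t - c2)^2 = (Qf t - c2) \<bullet> (Qf t - c2)" by (rule power2_norm_eq_inner)
        also have "\<dots> = Qf t \<bullet> Qf t - 2 * (c2 \<bullet> Qf t) + c2 \<bullet> c2"
          by (simp add: inner_diff_left inner_diff_right inner_commute)
        also have "Qf t \<bullet> Qf t = ?r^2" by (simp add: power2_norm_eq_inner)
        also have "c2 \<bullet> Qf t = ?r * (c2 \<bullet> d)" by (subst Qd) simp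
        finally show ?thesis by simp
      qed
      ultimately show ?thesis by simp
    qed
    have "p^2 + (c2 \<bullet> c2 - al0^2) + 2*(c2 \<bullet> c2 - al0^2)*(Av \<bullet> d) - 2*p*((c2 \<bullet> d) + al0*(G \<bullet> d))
      + (c2 \<bullet> c2 - al0^2)*(Av \<bullet> d)^2 - 2*p*(Av \<bullet> d)*((c2 \<bullet> d) + al0*(G \<bullet> d)) - p^2*(G \<bullet> d)^2 = 0"
      by (rule H_point[OF e1 e2])
    hence "p^2 + (c2 \<bullet> c2 - al0^2) + 2*(c2 \<bullet> c2 - al0^2)*(Av \<bullet> d) - 2*p*((c2 + al0 *\<^sub>R G) \<bullet> d)
      + (c2 \<bullet> c2 - al0^2)*(Av \<bullet> d)^2 - 2*p*(Av \<bullet> d)*((c2 + al0 *\<^sub>R G) \<bullet> d) - p^2*(G \<bullet> d)^2 = 0"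
      by (simp add: inner_add_left)
    thus "d \<in> {d. Z \<bullet> d = 0 \<and> norm d = 1 \<and>
      p^2 + (c2 \<bullet> c2 - al0^2) + 2*(c2 \<bullet> c2 - al0^2)*(Av \<bullet> d) - 2*p*((c2 + al0 *\<^sub>R G) \<bullet> d)
      + (c2 \<bullet> c2 - al0^2)*(Av \<bullet> d)^2 - 2*p*(Av \<bullet> d)*((c2 + al0 *\<^sub>R G) \<bullet> d) - p^2*(G \<bullet> d)^2 = 0}"
      using z n1 by simp
  qed
  note H0 = H_all[OF u comp HD Dinf]
  have GG: "G \<bullet> G = e^2"
  proof -
    have "norm G = e" unfolding G_def using ae(1) dc by (simp add: dist_norm)
    thus ?thesis by (simp add: power2_norm_eq_inner[symmetric])
  qed
  have ZG: "Z \<bullet> G = 0" unfolding G_def using cZ by (simp add: inner_diff_right)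
  have aldef: "al0 = a*(1-e^2) - c2 \<bullet> G"
  proof -
    have c1e: "c1 = c2 + (2*a) *\<^sub>R G" unfolding G_def using ae(1) by simp
    have "c1 \<bullet> c1 = c2 \<bullet> c2 + 4*a*(c2 \<bullet> G) + 4*a^2*(G \<bullet> G)"
      unfolding c1e by (simp add: inner_add_left inner_add_right inner_commute power2_eq_square algebra_simps)
    thus ?thesis unfolding al0_def GG using ae(1) by (simp add: field_simps power2_eq_square)
  qed
  have res: "p = a*(1-e^2) \<and> Av \<bullet> Av = e^2"
    by (rule G3[where Z=Z and A=Av and c=c2 and G=G and al=al0 and p=p,
          OF u comp ae(1) ae(2) ae(3) ppos ZA ZG cZ(2) GG aldef H0])
  show ?thesis
  proof (intro conjI P1 ballI)
    fix t assume t: "t \<in> ?I"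
    have p1: "p = a*(1-e^2)" and ee: "Av \<bullet> Av = e^2" using res by auto
    have "e^2 < 1" using ae by (simp add: abs_square_less_1)
    hence pp: "1 - e^2 > 0" by simp
    have "(Wf t \<bullet> Wf t - 2 / norm (Qf t)) * p = e^2 - 1" using AA[OF t] ee by simp
    hence "Wf t \<bullet> Wf t - 2 / norm (Qf t) = (e^2 - 1) / (a*(1-e^2))" using p1 pp ae(1)
      by (simp add: field_simps)
    also have "\<dots> = - 1 / a" using pp ae(1) by (simp add: field_simps)
    finally have w: "Wf t \<bullet> Wf t - 2 / norm (Qf t) = - 1 / a" .
    have "energy R Z (q t) (v t) = 1/2 * (Wf t \<bullet> Wf t - 2 / norm (Qf t)) + p / (2 * R^2)"
      using En[OF t] pL[OF t] by (simp add: algebra_simps)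
    thus "energy R Z (q t) (v t) = - 1 / (2 * a) + a * (1 - e^2) / (2 * R^2)"
      unfolding w p1 by simp
  qed
qed

end
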